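(* Let $(X,G)$ be a free exact $G$-odometer. Then its topological full group $[[G]]$ is amenable if and only if $G$ is amenable.
   Context: Exact $G$-odometer: for a decreasing sequence of finite-index normal subgroups $G_0\supseteq G_1\supseteq\cdots$ of a countable group $G$, the inverse limit $\varprojlim(G/G_n,\pi_n)$ under the natural quotient maps, with $G$ acting by left multiplication coordinatewise. Free: $g\cdot x=x$ implies $g=e$. Topological full group $[[G]]$: all homeomorphisms $s$ of $X$ such that every $x\in X$ has a clopen neighborhood $U$ and some $g\in G$ with $s(y)=g\cdot y$ for $y\in U$. *)

theory Defs
  imports "HOL-Analysis.Analysis" "HOL-Algebra.Coset"
begin

definition amenable :: "('a, 'b) monoid_scheme \<Rightarrow> bool" where
  "amenable H \<longleftrightarrow> (\<exists>\<mu> :: 'a set \<Rightarrow> real.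
      \<mu> (carrier H) = 1 \<and>
      (\<forall>A. A \<subseteq> carrier H \<longrightarrow> 0 \<le> \<mu> A) \<and>
      (\<forall>A B. A \<subseteq> carrier H \<longrightarrow> B \<subseteq> carrier H \<longrightarrow> A \<inter> B = {} \<longrightarrow>
              \<mu> (A \<union> B) = \<mu> A + \<mu> B) \<and>
      (\<forall>g \<in> carrier H. \<forall>A. A \<subseteq> carrier H \<longrightarrow> \<mu> (g <#\<^bsub>H\<^esub> A) = \<mu> A))"

text \<open>The odometer: points are compatible sequences of cosets x n \<in> G/G_n with
 x (Suc n) \<subseteq> x n (i.e. \<pi>_n (x (Suc n)) = x n).\<close>
definition odometer_space :: "('a, 'b) monoid_scheme \<Rightarrow> (nat \<Rightarrow> 'a set) \<Rightarrow> (nat \<Rightarrow> 'a set) set" where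
  "odometer_space G Gs = {x. (\<forall>n. x n \<in> rcosets\<^bsub>G\<^esub> (Gs n)) \<and> (\<forall>n. x (Suc n) \<subseteq> x n)}"

definition odometer_topology :: "('a, 'b) monoid_scheme \<Rightarrow> (nat \<Rightarrow> 'a set) \<Rightarrow> (nat \<Rightarrow> 'a set) topology" where
  "odometer_topology G Gs =
     subtopology (product_topology (\<lambda>n. discrete_topology (rcosets\<^bsub>G\<^esub> (Gs n))) UNIV)
                 (odometer_space G Gs)"

definition odometer_action :: "('a, 'b) monoid_scheme \<Rightarrow> 'a \<Rightarrow> (nat \<Rightarrow> 'a set) \<Rightarrow> (nat \<Rightarrow> 'a set)" where
  "odometer_action G g x = (\<lambda>n. g <#\<^bsub>G\<^esub> x n)"

definition topological_full_group ::
  "('a, 'b) monoid_scheme \<Rightarrow> (nat \<Rightarrow> 'a set) \<Rightarrow> ((nat \<Rightarrow> 'a set) \<Rightarrow> (nat \<Rightarrow> 'a set)) monoid" where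
  "topological_full_group G Gs =
     \<lparr> carrier = {s. homeomorphic_map (odometer_topology G Gs) (odometer_topology G Gs) s \<and>
                    (\<forall>x. x \<notin> odometer_space G Gs \<longrightarrow> s x = x) \<and>
                    (\<forall>x \<in> odometer_space G Gs. \<exists>U g.
                        openin (odometer_topology G Gs) U \<and> closedin (odometer_topology G Gs) U \<and>
                        x \<in> U \<and> g \<in> carrier G \<and>
                        (\<forall>y \<in> U. s y = odometer_action G g y))},
       monoid.mult = (\<lambda>s t. s \<circ> t),
       one = id \<rparr>"

end

theory Submission
  imports Defs
begin


section \<open>Finitely additive means and integration\<close>

locale fam =
  fixes Y :: "'y set" and \<nu> :: "'y set \<Rightarrow> real"
  assumes add: "\<And>A B. A \<subseteq> Y \<Longrightarrow> B \<subseteq> Y \<Longrightarrow> A \<inter> B = {} \<Longrightarrow> \<nu> (A \<union> B) = \<nu> A + \<nu> B"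
    and nonneg: "\<And>A. A \<subseteq> Y \<Longrightarrow> 0 \<le> \<nu> A"
    and total: "\<nu> Y = 1"
begin

lemma empty: "\<nu> {} = 0"
  using add[of "{}" "{}"] by simp

lemma split: "A \<subseteq> Y \<Longrightarrow> \<nu> A = \<nu> (A \<inter> B) + \<nu> (A - B)"
proof -
  assume A: "A \<subseteq> Y"
  have "A \<inter> B \<union> (A - B) = A" by blast
  then show ?thesis using add[of "A \<inter> B" "A - B"] A by auto
qed

lemma mono: "A \<subseteq> B \<Longrightarrow> B \<subseteq> Y \<Longrightarrow> \<nu> A \<le> \<nu> B"
  using split[of B A] nonneg[of "B - A"] by (auto simp: Int_absorb1)

lemma le1: "A \<subseteq> Y \<Longrightarrow> \<nu> A \<le> 1"
  using mono[of A Y] total by simp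

definition sfun :: "(real \<times> 'y set) list \<Rightarrow> 'y \<Rightarrow> real" where
  "sfun L y = (\<Sum>p\<leftarrow>L. (if y \<in> snd p then fst p else 0))"

definition swt :: "'y set \<Rightarrow> (real \<times> 'y set) list \<Rightarrow> real" where
  "swt W L = (\<Sum>p\<leftarrow>L. fst p * \<nu> (snd p \<inter> W))"

lemma sfun_simps [simp]: "sfun [] y = 0" "sfun (p # L) y = (if y \<in> snd p then fst p else 0) + sfun L y"
  "sfun (L1 @ L2) y = sfun L1 y + sfun L2 y"
  by (simp_all add: sfun_def)

lemma swt_simps [simp]: "swt W [] = 0" "swt W (p # L) = fst p * \<nu> (snd p \<inter> W) + swt W L"
  "swt W (L1 @ L2) = swt W L1 + swt W L2"
  by (simp_all add: swt_def)

lemma swt_split: "W \<subseteq> Y \<Longrightarrow> swt W L = swt (W \<inter> C) L + swt (W - C) L"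
proof (induction L)
  case (Cons p L)
  have "\<nu> (snd p \<inter> W) = \<nu> (snd p \<inter> (W \<inter> C)) + \<nu> (snd p \<inter> (W - C))"
    using split[of "snd p \<inter> W" C] Cons.prems by (auto simp: Int_assoc Int_Diff)
  then show ?case using Cons by (simp add: algebra_simps)
qed simp

lemma key: "W \<subseteq> Y \<Longrightarrow> (\<forall>y\<in>W. d \<le> sfun L y) \<Longrightarrow> d * \<nu> W \<le> swt W L"
proof (induction L arbitrary: d W)
  case Nil
  show ?case
  proof (cases "W = {}")
    case True then show ?thesis by (simp add: empty)
  next
    case False
    then obtain y where "y \<in> W" by auto
    with Nil have "d \<le> 0" by auto
    then show ?thesis using nonneg[OF Nil(1)] by (simp add: mult_nonpos_nonneg)
  qed
next
  case (Cons p L)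
  obtain c B where p: "p = (c, B)" by force
  have W1: "W \<inter> B \<subseteq> Y" "W - B \<subseteq> Y" using Cons.prems by auto
  have "\<forall>y\<in>W \<inter> B. d - c \<le> sfun L y" using Cons.prems(2) p by auto
  then have h1: "(d - c) * \<nu> (W \<inter> B) \<le> swt (W \<inter> B) L"
    using Cons.IH[OF W1(1)] by blast
  have "\<forall>y\<in>W - B. d \<le> sfun L y" using Cons.prems(2) p by auto
  then have h2: "d * \<nu> (W - B) \<le> swt (W - B) L"
    using Cons.IH[OF W1(2)] by blast
  have "\<nu> W = \<nu> (W \<inter> B) + \<nu> (W - B)" using split Cons.prems by blast
  moreover have "swt W L = swt (W \<inter> B) L + swt (W - B) L" using swt_split Cons.prems by blast
  ultimately show ?case using h1 h2 p by (simp add: algebra_simps Int_commute)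
qed

definition neg :: "(real \<times> 'y set) list \<Rightarrow> (real \<times> 'y set) list" where
  "neg L = map (\<lambda>p. (- fst p, snd p)) L"

lemma sfun_neg [simp]: "sfun (neg L) y = - sfun L y"
  by (induction L) (auto simp: neg_def)

lemma swt_neg [simp]: "swt W (neg L) = - swt W L"
  by (induction L) (auto simp: neg_def)

lemma sval_mono: "(\<forall>y\<in>Y. sfun L1 y \<le> sfun L2 y) \<Longrightarrow> swt Y L1 \<le> swt Y L2"
  using key[of Y 0 "L2 @ neg L1"] by auto

definition lower :: "('y \<Rightarrow> real) \<Rightarrow> real set" where
  "lower f = {swt Y L | L. \<forall>y\<in>Y. sfun L y \<le> f y}"

definition upper :: "('y \<Rightarrow> real) \<Rightarrow> real set" where
  "upper f = {swt Y L | L. \<forall>y\<in>Y. f y \<le> sfun L y}"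

definition I :: "('y \<Rightarrow> real) \<Rightarrow> real" where
  "I f = Sup (lower f)"

lemma lower_le_upper: "l \<in> lower f \<Longrightarrow> u \<in> upper f \<Longrightarrow> l \<le> u"
proof -
  assume "l \<in> lower f" "u \<in> upper f"
  then obtain L1 L2 where "l = swt Y L1" "\<forall>y\<in>Y. sfun L1 y \<le> f y" "u = swt Y L2" "\<forall>y\<in>Y. f y \<le> sfun L2 y"
    unfolding lower_def upper_def by blast
  then show ?thesis using sval_mono[of L1 L2] by force
qed

definition bnd :: "('y \<Rightarrow> real) \<Rightarrow> real \<Rightarrow> bool" where
  "bnd f M \<longleftrightarrow> (\<forall>y\<in>Y. 0 \<le> f y \<and> f y \<le> M)"

lemma const_in: "c \<ge> 0 \<Longrightarrow> (\<forall>y\<in>Y. f y \<le> c) \<Longrightarrow> c \<in> upper f"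
  unfolding upper_def using total by (intro CollectI exI[of _ "[(c, Y)]"]) auto

lemma zero_in: "(\<forall>y\<in>Y. 0 \<le> f y) \<Longrightarrow> 0 \<in> lower f"
  unfolding lower_def by (intro CollectI exI[of _ "[]"]) auto

lemma I_ge: assumes "bnd f M" "l \<in> lower f" shows "l \<le> I f"
proof -
  have "M \<ge> 0 \<or> Y = {}" using assms(1) unfolding bnd_def by force
  have "max M 0 \<in> upper f" using assms(1) unfolding bnd_def by (intro const_in) auto
  then have "bdd_above (lower f)" using lower_le_upper by (meson bdd_aboveI)
  then show ?thesis unfolding I_def using assms(2) by (simp add: cSup_upper)
qed

lemma I_le: assumes "bnd f M" "u \<in> upper f" shows "I f \<le> u"
proof -
  have "lower f \<noteq> {}" using zero_in assms(1) unfolding bnd_def by blast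
  then show ?thesis unfolding I_def using lower_le_upper assms(2) by (auto intro: cSup_least)
qed

lemma approx_list:
  assumes "bnd f M" "k > 0"
  defines "L \<equiv> map (\<lambda>j. (M / real k, {y. real (Suc j) * M / real k \<le> f y})) [0..<k]"
  shows "\<forall>y\<in>Y. sfun L y \<le> f y \<and> f y \<le> sfun L y + M / real k"
proof
  fix y assume y: "y \<in> Y"
  have M: "M \<ge> 0" "0 \<le> f y" "f y \<le> M" using assms(1) y unfolding bnd_def by auto
  have sf: "sfun L y = (\<Sum>j<k. (if real (Suc j) * M / real k \<le> f y then M / real k else 0))"
    unfolding L_def sfun_def map_map sum_set_upt_conv_sum_list_nat[symmetric]
    by (simp add: o_def atLeast0LessThan cong: if_cong)
  show "sfun L y \<le> f y \<and> f y \<le> sfun L y + M / real k"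
  proof (cases "M = 0")
    case True then show ?thesis using sf M by simp
  next
    case False
    with M have Mp: "M > 0" by simp
    define t where "t = f y * real k / M"
    have t: "0 \<le> t" "t \<le> real k" using M Mp assms(2) by (auto simp: t_def field_simps)
    have eqv: "(real (Suc j) * M / real k \<le> f y) \<longleftrightarrow> real (Suc j) \<le> t" for j
      using Mp assms(2) by (simp add: t_def field_simps)
    define q where "q = nat \<lfloor>t\<rfloor>"
    have q: "real q \<le> t" "t < real q + 1" "q \<le> k" using t unfolding q_def
      by (auto simp: of_nat_nat floor_le_iff) (linarith+)
    have "{j. j < k \<and> real (Suc j) \<le> t} = {..<q}"
      using q by (auto simp: q_def le_nat_floor) (linarith+)
    then have "sfun L y = M / real k * real q"
      unfolding sf eqv by (simp add: sum.If_cases Int_def lessThan_def)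
    moreover have "f y = M / real k * t" using Mp assms(2) by (simp add: t_def)
    moreover have "M / real k * real q \<le> M / real k * t"
      using q Mp assms(2) by (intro mult_left_mono) auto
    moreover have "M / real k * t \<le> M / real k * (real q + 1)"
      using q Mp assms(2) by (intro mult_left_mono) auto
    ultimately show ?thesis by (simp add: distrib_left)
  qed
qed

lemma approx:
  assumes "bnd f M" "e > 0"
  shows "\<exists>l u. l \<in> lower f \<and> u \<in> upper f \<and> u - l < e"
proof -
  have M: "M \<ge> 0 \<or> Y = {}" using assms(1) unfolding bnd_def by force
  show ?thesis
  proof (cases "Y = {}")
    case True
    then have "0 \<in> lower f" "0 \<in> upper f" unfolding lower_def upper_def
      by (auto intro!: exI[of _ "[]"])
    then show ?thesis using assms(2) by force
  next
    case False
    with M have M: "M \<ge> 0" by auto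
    obtain k :: nat where k: "real k > M / e" using reals_Archimedean2 by blast
    then have kp: "k > 0" using M assms(2) by (metis divide_nonneg_pos not_gr_zero not_less of_nat_0)
    define L where "L \<equiv> map (\<lambda>j. (M / real k, {y. real (Suc j) * M / real k \<le> f y})) [0..<k]"
    have A: "\<forall>y\<in>Y. sfun L y \<le> f y \<and> f y \<le> sfun L y + M / real k"
      using approx_list[OF assms(1) kp] unfolding L_def by blast
    have "swt Y L \<in> lower f" using A unfolding lower_def by blast
    moreover have "swt Y (L @ [(M / real k, Y)]) \<in> upper f" using A unfolding upper_def
      by (intro CollectI exI[of _ "L @ [(M / real k, Y)]"]) auto
    moreover have "swt Y (L @ [(M / real k, Y)]) - swt Y L = M / real k" using total by simp
    moreover have "M / real k < e" using k kp assms(2) M by (simp add: field_simps)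
    ultimately show ?thesis by metis
  qed
qed

lemma I_unique:
  assumes "bnd f M" "\<And>l. l \<in> lower f \<Longrightarrow> l \<le> r" "\<And>u. u \<in> upper f \<Longrightarrow> r \<le> u"
  shows "I f = r"
proof (rule ccontr)
  assume ne: "I f \<noteq> r"
  obtain l u where lu: "l \<in> lower f" "u \<in> upper f" "u - l < \<bar>I f - r\<bar>"
    using approx[OF assms(1), of "\<bar>I f - r\<bar>"] ne by auto
  have "l \<le> I f" "I f \<le> u" using I_ge I_le assms(1) lu by auto
  moreover have "l \<le> r" "r \<le> u" using assms(2)[OF lu(1)] assms(3)[OF lu(2)] .
  ultimately show False using lu(3) by (auto simp: abs_if split: if_splits)
qed

lemma I_nonneg: "bnd f M \<Longrightarrow> 0 \<le> I f"
  using I_ge zero_in unfolding bnd_def by blast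

lemma I_const: "c \<ge> 0 \<Longrightarrow> (\<forall>y\<in>Y. f y = c) \<Longrightarrow> I f = c"
proof -
  assume c: "c \<ge> 0" "\<forall>y\<in>Y. f y = c"
  have b: "bnd f c" using c unfolding bnd_def by auto
  have "swt Y [(c, Y)] = c" using total by simp
  moreover have "swt Y [(c,Y)] \<in> lower f" "swt Y [(c,Y)] \<in> upper f"
    using c unfolding lower_def upper_def by (auto intro!: exI[of _ "[(c,Y)]"])
  ultimately show ?thesis using I_ge[OF b] I_le[OF b] by (metis order_antisym)
qed

lemma I_add:
  assumes f: "bnd f M" and g: "bnd g N"
  shows "I (\<lambda>y. f y + g y) = I f + I g"
proof -
  have fg: "bnd (\<lambda>y. f y + g y) (M + N)" using f g unfolding bnd_def by (auto intro: add_mono)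
  have lo: "l1 + l2 \<in> lower (\<lambda>y. f y + g y)" if pr: "l1 \<in> lower f" "l2 \<in> lower g" for l1 l2
  proof -
    obtain L1 where "l1 = swt Y L1" "\<forall>y\<in>Y. sfun L1 y \<le> f y"
      using pr(1) unfolding lower_def by blast
    moreover obtain L2 where "l2 = swt Y L2" "\<forall>y\<in>Y. sfun L2 y \<le> g y"
      using pr(2) unfolding lower_def by blast
    ultimately show ?thesis unfolding lower_def by (intro CollectI exI[of _ "L1 @ L2"]) (auto intro: add_mono)
  qed
  have up: "u1 + u2 \<in> upper (\<lambda>y. f y + g y)" if pr: "u1 \<in> upper f" "u2 \<in> upper g" for u1 u2
  proof -
    obtain L1 where "u1 = swt Y L1" "\<forall>y\<in>Y. f y \<le> sfun L1 y"
      using pr(1) unfolding upper_def by blast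
    moreover obtain L2 where "u2 = swt Y L2" "\<forall>y\<in>Y. g y \<le> sfun L2 y"
      using pr(2) unfolding upper_def by blast
    ultimately show ?thesis unfolding upper_def by (intro CollectI exI[of _ "L1 @ L2"]) (auto intro: add_mono)
  qed
  show ?thesis
  proof (rule ccontr)
    assume ne: "I (\<lambda>y. f y + g y) \<noteq> I f + I g"
    define e where "e = \<bar>I (\<lambda>y. f y + g y) - (I f + I g)\<bar> / 2"
    have e: "e > 0" using ne by (simp add: e_def)
    obtain l1 u1 where 1: "l1 \<in> lower f" "u1 \<in> upper f" "u1 - l1 < e" using approx[OF f e] by blast
    obtain l2 u2 where 2: "l2 \<in> lower g" "u2 \<in> upper g" "u2 - l2 < e" using approx[OF g e] by blast
    have "l1 \<le> I f" "I f \<le> u1" "l2 \<le> I g" "I g \<le> u2" using 1 2 I_ge I_le f g by auto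
    moreover have "l1 + l2 \<le> I (\<lambda>y. f y + g y)" "I (\<lambda>y. f y + g y) \<le> u1 + u2"
      using I_ge[OF fg lo[OF 1(1) 2(1)]] I_le[OF fg up[OF 1(2) 2(2)]] .
    ultimately show False using 1(3) 2(3) unfolding e_def by (auto simp: abs_if split: if_splits)
  qed
qed

lemma I_cong: "(\<forall>y\<in>Y. f y = g y) \<Longrightarrow> I f = I g"
  unfolding I_def lower_def by (rule arg_cong[where f=Sup]) auto

lemma I_invariant:
  assumes f: "bnd f M" and \<phi>: "\<And>y. y \<in> Y \<Longrightarrow> \<phi> y \<in> Y"
    and pres: "\<And>B. \<nu> ({y\<in>Y. \<phi> y \<in> B}) = \<nu> (B \<inter> Y)"
  shows "I (\<lambda>y. f (\<phi> y)) = I f"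
proof -
  have f': "bnd (\<lambda>y. f (\<phi> y)) M" using f \<phi> unfolding bnd_def by auto
  define tr :: "(real \<times> 'y set) list \<Rightarrow> (real \<times> 'y set) list" where "tr L = map (\<lambda>p. (fst p, {y. \<phi> y \<in> snd p})) L" for L
  have sf: "sfun (tr L) y = sfun L (\<phi> y)" for L y by (induction L) (auto simp: tr_def)
  have sw: "swt Y (tr L) = swt Y L" for L
  proof (induction L)
    case (Cons p L)
    have "{y. \<phi> y \<in> snd p} \<inter> Y = {y\<in>Y. \<phi> y \<in> snd p}" by auto
    then show ?case using Cons pres[of "snd p"] by (simp add: tr_def Int_commute)
  qed (simp add: tr_def)
  show ?thesis
  proof (rule I_unique[OF f, THEN sym])
    fix l assume "l \<in> lower f"
    then obtain L where L: "l = swt Y L" "\<forall>y\<in>Y. sfun L y \<le> f y" unfolding lower_def by blast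
    then have "l \<in> lower (\<lambda>y. f (\<phi> y))" unfolding lower_def using sf sw \<phi>
      by (intro CollectI exI[of _ "tr L"]) auto
    then show "l \<le> I (\<lambda>y. f (\<phi> y))" using I_ge[OF f'] by blast
  next
    fix u assume "u \<in> upper f"
    then obtain L where L: "u = swt Y L" "\<forall>y\<in>Y. f y \<le> sfun L y" unfolding upper_def by blast
    then have "u \<in> upper (\<lambda>y. f (\<phi> y))" unfolding upper_def using sf sw \<phi>
      by (intro CollectI exI[of _ "tr L"]) auto
    then show "I (\<lambda>y. f (\<phi> y)) \<le> u" using I_le[OF f'] by blast
  qed
qed

end



lemma l_coset_upd [simp]: "l_coset (H\<lparr>carrier := S\<rparr>) = l_coset H"
  by (simp add: l_coset_def fun_eq_iff)

lemma amenableI: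
  fixes \<mu> :: "'a set \<Rightarrow> real" and H :: "('a, 'b) monoid_scheme"
  assumes "\<mu> (carrier H) = 1" "\<And>A. A \<subseteq> carrier H \<Longrightarrow> 0 \<le> \<mu> A"
    "\<And>A B. A \<subseteq> carrier H \<Longrightarrow> B \<subseteq> carrier H \<Longrightarrow> A \<inter> B = {} \<Longrightarrow> \<mu> (A \<union> B) = \<mu> A + \<mu> B"
    "\<And>g A. g \<in> carrier H \<Longrightarrow> A \<subseteq> carrier H \<Longrightarrow> \<mu> (g <#\<^bsub>H\<^esub> A) = \<mu> A"
  shows "amenable H"
  unfolding amenable_def using assms by (intro exI[of _ \<mu>]) simp

lemma amenableE:
  assumes "amenable H"
  obtains \<mu> where "fam (carrier H) \<mu>"
    "\<And>g A. g \<in> carrier H \<Longrightarrow> A \<subseteq> carrier H \<Longrightarrow> \<mu> (g <#\<^bsub>H\<^esub> A) = \<mu> A"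
proof -
  obtain \<mu> :: "'a set \<Rightarrow> real" where m: "\<mu> (carrier H) = 1"
      "\<forall>A. A \<subseteq> carrier H \<longrightarrow> 0 \<le> \<mu> A"
      "\<forall>A B. A \<subseteq> carrier H \<longrightarrow> B \<subseteq> carrier H \<longrightarrow> A \<inter> B = {} \<longrightarrow> \<mu> (A \<union> B) = \<mu> A + \<mu> B"
      "\<forall>g \<in> carrier H. \<forall>A. A \<subseteq> carrier H \<longrightarrow> \<mu> (g <#\<^bsub>H\<^esub> A) = \<mu> A"
    using assms unfolding amenable_def by (elim exE conjE) simp
  have "fam (carrier H) \<mu>" using m by unfold_locales auto
  then show ?thesis using that m(4) by blast
qed

lemma amenable_singleton:
  assumes "carrier H = {e}" "e \<otimes>\<^bsub>H\<^esub> e = e"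
  shows "amenable H"
proof (rule amenableI[where \<mu> = "\<lambda>A. if A = {} then 0 else 1"])
  fix g A assume "g \<in> carrier H" "A \<subseteq> carrier H"
  then have "g = e" "A = {} \<or> A = {e}" using assms by auto
  then show "(if g <#\<^bsub>H\<^esub> A = {} then 0 else 1) = (if A = {} then 0 else (1::real))"
    using assms by (auto simp: l_coset_def)
next
  fix A B assume "A \<subseteq> carrier H" "B \<subseteq> carrier H" "A \<inter> B = {}"
  then show "(if A \<union> B = {} then 0 else 1) = (if A = {} then 0 else 1) + (if B = {} then 0 else (1::real))"
    using assms by auto
qed (use assms in auto)

lemma amenable_inj_hom:
  assumes G: "group G" and H: "group H" and \<phi>: "\<phi> \<in> hom G H" and inj: "inj_on \<phi> (carrier G)"
    and am: "amenable H"
  shows "amenable G"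
proof -
  interpret G: group G by (rule G)
  interpret H: group H by (rule H)
  interpret gh: group_hom G H \<phi> using G H \<phi> by (simp add: group_hom_def group_hom_axioms_def)
  define K where "K = \<phi> ` carrier G"
  have K: "subgroup K H" unfolding K_def by (rule gh.img_is_subgroup)
  have Ksub: "K \<subseteq> carrier H" using K subgroup.subset by blast
  define \<rho> where "\<rho> h = (SOME t. t \<in> K #>\<^bsub>H\<^esub> h)" for h
  have \<rho>: "\<rho> h \<in> K #>\<^bsub>H\<^esub> h" if "h \<in> carrier H" for h
    unfolding \<rho>_def using H.rcos_self[OF that K] by (rule someI)
  have \<rho>c: "\<rho> h \<in> carrier H" if "h \<in> carrier H" for h
    using \<rho>[OF that] H.r_coset_subset_G[OF Ksub that] by blast
  have dec: "\<exists>k\<in>K. h = k \<otimes>\<^bsub>H\<^esub> \<rho> h" if h: "h \<in> carrier H" for h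
  proof -
    obtain k where k: "k \<in> K" "\<rho> h = k \<otimes>\<^bsub>H\<^esub> h" using \<rho>[OF h] unfolding r_coset_def by blast
    have kc: "k \<in> carrier H" using k Ksub by blast
    have e: "h = inv\<^bsub>H\<^esub> k \<otimes>\<^bsub>H\<^esub> \<rho> h" using k kc h by (simp add: H.m_assoc[symmetric])
    have "inv\<^bsub>H\<^esub> k \<in> K" using subgroup.m_inv_closed[OF K k(1)] .
    with e show ?thesis by blast
  qed
  have uniq: "k1 = k2 \<and> \<rho> h1 = \<rho> h2"
    if "k1 \<in> K" "k2 \<in> K" "h1 \<in> carrier H" "h2 \<in> carrier H" "k1 \<otimes>\<^bsub>H\<^esub> \<rho> h1 = k2 \<otimes>\<^bsub>H\<^esub> \<rho> h2"
    for k1 k2 h1 h2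
  proof -
    have c: "k1 \<in> carrier H" "k2 \<in> carrier H" "\<rho> h1 \<in> carrier H" "\<rho> h2 \<in> carrier H"
      using that(1-4) Ksub \<rho>c by auto
    have "\<rho> h1 = inv\<^bsub>H\<^esub> k1 \<otimes>\<^bsub>H\<^esub> (k1 \<otimes>\<^bsub>H\<^esub> \<rho> h1)"
      using c by (simp add: H.m_assoc[symmetric])
    also have "\<dots> = inv\<^bsub>H\<^esub> k1 \<otimes>\<^bsub>H\<^esub> (k2 \<otimes>\<^bsub>H\<^esub> \<rho> h2)" using that(5) by simp
    also have "\<dots> = (inv\<^bsub>H\<^esub> k1 \<otimes>\<^bsub>H\<^esub> k2) \<otimes>\<^bsub>H\<^esub> \<rho> h2"
      using c by (simp add: H.m_assoc)
    finally have e1: "\<rho> h1 = (inv\<^bsub>H\<^esub> k1 \<otimes>\<^bsub>H\<^esub> k2) \<otimes>\<^bsub>H\<^esub> \<rho> h2" .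
    have "inv\<^bsub>H\<^esub> k1 \<otimes>\<^bsub>H\<^esub> k2 \<in> K"
      using subgroup.m_closed[OF K subgroup.m_inv_closed[OF K that(1)] that(2)] .
    with e1 have "\<rho> h1 \<in> K #>\<^bsub>H\<^esub> \<rho> h2" unfolding r_coset_def by blast
    then have "K #>\<^bsub>H\<^esub> \<rho> h2 = K #>\<^bsub>H\<^esub> \<rho> h1" using H.repr_independence[OF _ c(4) K] by blast
    moreover have "K #>\<^bsub>H\<^esub> h1 = K #>\<^bsub>H\<^esub> \<rho> h1" using H.repr_independence[OF \<rho>[OF that(3)] that(3) K] .
    moreover have "K #>\<^bsub>H\<^esub> h2 = K #>\<^bsub>H\<^esub> \<rho> h2" using H.repr_independence[OF \<rho>[OF that(4)] that(4) K] .
    ultimately have eq: "\<rho> h1 = \<rho> h2" unfolding \<rho>_def by simp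
    then have "k1 \<otimes>\<^bsub>H\<^esub> \<rho> h2 = k2 \<otimes>\<^bsub>H\<^esub> \<rho> h2" using that(5) by simp
    then have "k1 = k2" using H.right_cancel[of "\<rho> h2" k1 k2] c by blast
    with eq show ?thesis by blast
  qed
  define T where "T = \<rho> ` carrier H"
  obtain \<mu> where \<mu>: "fam (carrier H) \<mu>"
    "\<And>g A. g \<in> carrier H \<Longrightarrow> A \<subseteq> carrier H \<Longrightarrow> \<mu> (g <#\<^bsub>H\<^esub> A) = \<mu> A"
    using amenableE[OF am] by blast
  interpret \<mu>: fam "carrier H" \<mu> by (rule \<mu>(1))
  define \<Phi> where "\<Phi> A = {\<phi> a \<otimes>\<^bsub>H\<^esub> t | a t. a \<in> A \<and> t \<in> T}" for A
  have \<Phi>sub: "\<Phi> A \<subseteq> carrier H" if "A \<subseteq> carrier G" for A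
    using that \<rho>c unfolding \<Phi>_def T_def by auto
  show ?thesis
  proof (rule amenableI[where \<mu> = "\<lambda>A. \<mu> (\<Phi> A)"])
    have "\<Phi> (carrier G) = carrier H"
    proof
      show "carrier H \<subseteq> \<Phi> (carrier G)"
      proof
        fix h assume h: "h \<in> carrier H"
        then obtain k where "k \<in> K" "h = k \<otimes>\<^bsub>H\<^esub> \<rho> h" using dec by blast
        then show "h \<in> \<Phi> (carrier G)" unfolding \<Phi>_def T_def K_def using h by blast
      qed
    qed (rule \<Phi>sub, simp)
    then show "\<mu> (\<Phi> (carrier G)) = 1" using \<mu>.total by simp
  next
    fix A assume "A \<subseteq> carrier G" then show "0 \<le> \<mu> (\<Phi> A)" using \<mu>.nonneg \<Phi>sub by blast
  next
    fix A B assume AB: "A \<subseteq> carrier G" "B \<subseteq> carrier G" "A \<inter> B = {}"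
    have "\<Phi> (A \<union> B) = \<Phi> A \<union> \<Phi> B" unfolding \<Phi>_def by blast
    moreover have "\<Phi> A \<inter> \<Phi> B = {}"
    proof (rule ccontr)
      assume "\<Phi> A \<inter> \<Phi> B \<noteq> {}"
      then obtain a b h1 h2 where ab: "a \<in> A" "b \<in> B" "h1 \<in> carrier H" "h2 \<in> carrier H"
        "\<phi> a \<otimes>\<^bsub>H\<^esub> \<rho> h1 = \<phi> b \<otimes>\<^bsub>H\<^esub> \<rho> h2" unfolding \<Phi>_def T_def by blast
      have "\<phi> a \<in> K" "\<phi> b \<in> K" using AB ab unfolding K_def by auto
      then have "\<phi> a = \<phi> b" using uniq ab by blast
      moreover have "a \<in> carrier G" "b \<in> carrier G" using AB ab by auto
      ultimately have "a = b" using inj by (meson inj_onD)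
      then show False using AB ab by blast
    qed
    ultimately show "\<mu> (\<Phi> (A \<union> B)) = \<mu> (\<Phi> A) + \<mu> (\<Phi> B)" using \<mu>.add \<Phi>sub AB by simp
  next
    fix g A assume gA: "g \<in> carrier G" "A \<subseteq> carrier G"
    have mul: "\<phi> (g \<otimes>\<^bsub>G\<^esub> a) \<otimes>\<^bsub>H\<^esub> t = \<phi> g \<otimes>\<^bsub>H\<^esub> (\<phi> a \<otimes>\<^bsub>H\<^esub> t)" if "a \<in> A" "t \<in> T" for a t
      using that gA \<rho>c unfolding T_def by (auto simp: H.m_assoc)
    have "\<Phi> (g <#\<^bsub>G\<^esub> A) = \<phi> g <#\<^bsub>H\<^esub> \<Phi> A"
    proof
      show "\<Phi> (g <#\<^bsub>G\<^esub> A) \<subseteq> \<phi> g <#\<^bsub>H\<^esub> \<Phi> A"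
      proof
        fix x assume "x \<in> \<Phi> (g <#\<^bsub>G\<^esub> A)"
        then obtain a t where at: "a \<in> A" "t \<in> T" "x = \<phi> (g \<otimes>\<^bsub>G\<^esub> a) \<otimes>\<^bsub>H\<^esub> t"
          unfolding \<Phi>_def l_coset_def by blast
        moreover have "\<phi> a \<otimes>\<^bsub>H\<^esub> t \<in> \<Phi> A" using at unfolding \<Phi>_def by blast
        ultimately show "x \<in> \<phi> g <#\<^bsub>H\<^esub> \<Phi> A" using mul unfolding l_coset_def by auto
      qed
      show "\<phi> g <#\<^bsub>H\<^esub> \<Phi> A \<subseteq> \<Phi> (g <#\<^bsub>G\<^esub> A)"
      proof
        fix x assume "x \<in> \<phi> g <#\<^bsub>H\<^esub> \<Phi> A"
        then obtain a t where at: "a \<in> A" "t \<in> T" "x = \<phi> g \<otimes>\<^bsub>H\<^esub> (\<phi> a \<otimes>\<^bsub>H\<^esub> t)"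
          unfolding \<Phi>_def l_coset_def by blast
        then have "g \<otimes>\<^bsub>G\<^esub> a \<in> g <#\<^bsub>G\<^esub> A" unfolding l_coset_def by blast
        moreover have "x = \<phi> (g \<otimes>\<^bsub>G\<^esub> a) \<otimes>\<^bsub>H\<^esub> t" using mul[OF at(1,2)] at(3) by simp
        ultimately show "x \<in> \<Phi> (g <#\<^bsub>G\<^esub> A)" using at(2) unfolding \<Phi>_def by blast
      qed
    qed
    then show "\<mu> (\<Phi> (g <#\<^bsub>G\<^esub> A)) = \<mu> (\<Phi> A)" using \<mu>(2) gA \<Phi>sub by simp
  qed
qed

lemma amenable_subgroup:
  assumes "group H" "subgroup K H" "amenable H"
  shows "amenable (H\<lparr>carrier := K\<rparr>)"
proof (rule amenable_inj_hom[OF _ assms(1) _ _ assms(3), where \<phi> = id])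
  show "group (H\<lparr>carrier := K\<rparr>)" using assms by (simp add: group.subgroup_imp_group)
  show "id \<in> hom (H\<lparr>carrier := K\<rparr>) H" using subgroup.subset[OF assms(2)] by (auto simp: hom_def)
qed simp



lemma (in group) lcos_carrier_eq: "g \<in> carrier G \<Longrightarrow> g <# carrier G = carrier G"
proof
  assume g: "g \<in> carrier G"
  show "g <# carrier G \<subseteq> carrier G" using l_coset_subset_G[OF _ g] by simp
  show "carrier G \<subseteq> g <# carrier G"
  proof
    fix h assume h: "h \<in> carrier G"
    have "h = g \<otimes> (inv g \<otimes> h)" using g h by (simp add: m_assoc[symmetric])
    then show "h \<in> g <# carrier G" unfolding l_coset_def using g h by blast
  qed
qed

lemma (in group) lcos_disj:
  assumes "g \<in> carrier G" "A \<subseteq> carrier G" "B \<subseteq> carrier G" "A \<inter> B = {}"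
  shows "(g <# A) \<inter> (g <# B) = {}"
proof (rule ccontr)
  assume "(g <# A) \<inter> (g <# B) \<noteq> {}"
  then obtain a b where ab: "a \<in> A" "b \<in> B" "g \<otimes> a = g \<otimes> b" unfolding l_coset_def by blast
  then have "inv g \<otimes> (g \<otimes> a) = inv g \<otimes> (g \<otimes> b)" by simp
  then have "a = b" using assms ab by (simp add: m_assoc[symmetric] subsetD)
  then show False using ab assms by blast
qed

lemma lcos_Un: "g <#\<^bsub>G\<^esub> (A \<union> B) = (g <#\<^bsub>G\<^esub> A) \<union> (g <#\<^bsub>G\<^esub> B)"
  unfolding l_coset_def by blast

section \<open>The key lemma: transitive actions with invariant mean and amenable stabiliser\<close>

lemma KL:
  fixes H :: "('g, 'c) monoid_scheme" and act :: "'g \<Rightarrow> 'y \<Rightarrow> 'y" and \<nu> :: "'y set \<Rightarrow> real"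
  assumes grp: "group H"
    and act_in: "\<And>g y. g \<in> carrier H \<Longrightarrow> y \<in> Y \<Longrightarrow> act g y \<in> Y"
    and act_mult: "\<And>g h y. g \<in> carrier H \<Longrightarrow> h \<in> carrier H \<Longrightarrow> y \<in> Y \<Longrightarrow>
        act (g \<otimes>\<^bsub>H\<^esub> h) y = act g (act h y)"
    and act_one: "\<And>y. y \<in> Y \<Longrightarrow> act \<one>\<^bsub>H\<^esub> y = y"
    and yb: "yb \<in> Y" and orb: "\<And>y. y \<in> Y \<Longrightarrow> \<exists>h\<in>carrier H. act h yb = y"
    and \<nu>: "fam Y \<nu>"
    and inv: "\<And>g B. g \<in> carrier H \<Longrightarrow> \<nu> {y\<in>Y. act g y \<in> B} = \<nu> (B \<inter> Y)"
    and stab: "amenable (H\<lparr>carrier := {h\<in>carrier H. act h yb = yb}\<rparr>)"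
  shows "amenable H"
proof -
  interpret H: group H by (rule grp)
  interpret \<nu>: fam Y \<nu> by (rule \<nu>)
  define S where "S = {h\<in>carrier H. act h yb = yb}"
  have Ssub: "S \<subseteq> carrier H" unfolding S_def by blast
  have act_inv: "act (inv\<^bsub>H\<^esub> g) (act g y) = y" if "g \<in> carrier H" "y \<in> Y" for g y
    using act_mult[of "inv\<^bsub>H\<^esub> g" g y] act_one that by simp
  have act_inv2: "act g (act (inv\<^bsub>H\<^esub> g) y) = y" if "g \<in> carrier H" "y \<in> Y" for g y
    using act_mult[of g "inv\<^bsub>H\<^esub> g" y] act_one that by simp
  have S_inv: "inv\<^bsub>H\<^esub> a \<in> S" if "a \<in> S" for a
    using that act_inv[of a yb] yb unfolding S_def by auto
  obtain m where m: "fam S m" "\<And>g A. g \<in> S \<Longrightarrow> A \<subseteq> S \<Longrightarrow> m (g <#\<^bsub>H\<^esub> A) = m A"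
    using amenableE[OF stab[folded S_def]] by auto
  interpret m: fam S m by (rule m(1))
  define r where "r y = (SOME h. h \<in> carrier H \<and> act h yb = y)" for y
  have r: "r y \<in> carrier H \<and> act (r y) yb = y" if "y \<in> Y" for y
  proof -
    have "\<exists>h. h \<in> carrier H \<and> act h yb = y" using orb[OF that] by blast
    then show ?thesis unfolding r_def by (rule someI_ex)
  qed
  define F where "F A y = m ((inv\<^bsub>H\<^esub> (r y) <#\<^bsub>H\<^esub> A) \<inter> S)" for A y
  have Fb: "\<nu>.bnd (F A) 1" for A
    unfolding \<nu>.bnd_def F_def using m.nonneg m.le1 by auto
  show ?thesis
  proof (rule amenableI[where \<mu> = "\<lambda>A. \<nu>.I (F A)"])
    have "\<forall>y\<in>Y. F (carrier H) y = 1"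
    proof
      fix y assume "y \<in> Y"
      then have "inv\<^bsub>H\<^esub> (r y) <#\<^bsub>H\<^esub> carrier H = carrier H" using r H.lcos_carrier_eq by simp
      then show "F (carrier H) y = 1" unfolding F_def using Ssub m.total by (simp add: Int_absorb1)
    qed
    then show "\<nu>.I (F (carrier H)) = 1" using \<nu>.I_const[of 1] by simp
  next
    fix A show "0 \<le> \<nu>.I (F A)" using \<nu>.I_nonneg[OF Fb] .
  next
    fix A B assume AB: "A \<subseteq> carrier H" "B \<subseteq> carrier H" "A \<inter> B = {}"
    have "\<forall>y\<in>Y. F (A \<union> B) y = F A y + F B y"
    proof
      fix y assume y: "y \<in> Y"
      define g where "g = inv\<^bsub>H\<^esub> (r y)"
      have g: "g \<in> carrier H" using r y unfolding g_def by simp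
      have d: "(g <#\<^bsub>H\<^esub> A) \<inter> (g <#\<^bsub>H\<^esub> B) = {}" using H.lcos_disj[OF g AB] .
      have "(g <#\<^bsub>H\<^esub> (A \<union> B)) \<inter> S = ((g <#\<^bsub>H\<^esub> A) \<inter> S) \<union> ((g <#\<^bsub>H\<^esub> B) \<inter> S)"
        by (auto simp: lcos_Un)
      moreover have "((g <#\<^bsub>H\<^esub> A) \<inter> S) \<inter> ((g <#\<^bsub>H\<^esub> B) \<inter> S) = {}" using d by blast
      ultimately show "F (A \<union> B) y = F A y + F B y"
        unfolding F_def g_def[symmetric] using m.add by simp
    qed
    then have "\<nu>.I (F (A \<union> B)) = \<nu>.I (\<lambda>y. F A y + F B y)" by (rule \<nu>.I_cong)
    also have "\<dots> = \<nu>.I (F A) + \<nu>.I (F B)" using \<nu>.I_add[OF Fb Fb] .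
    finally show "\<nu>.I (F (A \<union> B)) = \<nu>.I (F A) + \<nu>.I (F B)" .
  next
    fix g A assume gA: "g \<in> carrier H" "A \<subseteq> carrier H"
    have ig: "inv\<^bsub>H\<^esub> g \<in> carrier H" using gA by simp
    have pt: "F (g <#\<^bsub>H\<^esub> A) y = F A (act (inv\<^bsub>H\<^esub> g) y)" if y: "y \<in> Y" for y
    proof -
      define y' where "y' = act (inv\<^bsub>H\<^esub> g) y"
      have y': "y' \<in> Y" unfolding y'_def using act_in[OF ig y] .
      define a where "a = r y"
      define b where "b = r y'"
      have a: "a \<in> carrier H" "act a yb = y" using r[OF y] unfolding a_def by auto
      have b: "b \<in> carrier H" "act b yb = y'" using r[OF y'] unfolding b_def by auto
      define n where "n = inv\<^bsub>H\<^esub> a \<otimes>\<^bsub>H\<^esub> g \<otimes>\<^bsub>H\<^esub> b"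
      have nc: "n \<in> carrier H" unfolding n_def using a b gA by simp
      have "act n yb = act (inv\<^bsub>H\<^esub> a) (act g (act b yb))"
        unfolding n_def using a b gA yb y' act_in by (simp add: act_mult)
      also have "\<dots> = act (inv\<^bsub>H\<^esub> a) y" using b(2) act_inv2[OF gA(1) y] unfolding y'_def by simp
      also have "\<dots> = yb" using act_inv[OF a(1) yb] a(2) by simp
      finally have nS: "n \<in> S" unfolding S_def using nc by simp
      have eq: "inv\<^bsub>H\<^esub> a \<otimes>\<^bsub>H\<^esub> g = n \<otimes>\<^bsub>H\<^esub> inv\<^bsub>H\<^esub> b"
        unfolding n_def using a b gA by (simp add: H.m_assoc)
      define Z where "Z = inv\<^bsub>H\<^esub> b <#\<^bsub>H\<^esub> A"
      have Zc: "Z \<subseteq> carrier H" unfolding Z_def using H.l_coset_subset_G gA b by simp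
      have "inv\<^bsub>H\<^esub> a <#\<^bsub>H\<^esub> (g <#\<^bsub>H\<^esub> A) = (inv\<^bsub>H\<^esub> a \<otimes>\<^bsub>H\<^esub> g) <#\<^bsub>H\<^esub> A"
        using H.lcos_m_assoc gA a by simp
      also have "\<dots> = (n \<otimes>\<^bsub>H\<^esub> inv\<^bsub>H\<^esub> b) <#\<^bsub>H\<^esub> A" using eq by simp
      also have "\<dots> = n <#\<^bsub>H\<^esub> Z" unfolding Z_def using H.lcos_m_assoc gA b nc by simp
      finally have e1: "inv\<^bsub>H\<^esub> a <#\<^bsub>H\<^esub> (g <#\<^bsub>H\<^esub> A) = n <#\<^bsub>H\<^esub> Z" .
      have e2: "(n <#\<^bsub>H\<^esub> Z) \<inter> S = n <#\<^bsub>H\<^esub> (Z \<inter> S)"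
      proof
        show "n <#\<^bsub>H\<^esub> (Z \<inter> S) \<subseteq> (n <#\<^bsub>H\<^esub> Z) \<inter> S"
        proof
          fix x assume "x \<in> n <#\<^bsub>H\<^esub> (Z \<inter> S)"
          then obtain z where z: "z \<in> Z" "z \<in> S" "x = n \<otimes>\<^bsub>H\<^esub> z" unfolding l_coset_def by blast
          have "x \<in> S" using z nS Ssub yb unfolding S_def by (auto simp: act_mult)
          then show "x \<in> (n <#\<^bsub>H\<^esub> Z) \<inter> S" using z unfolding l_coset_def by blast
        qed
        show "(n <#\<^bsub>H\<^esub> Z) \<inter> S \<subseteq> n <#\<^bsub>H\<^esub> (Z \<inter> S)"
        proof
          fix x assume "x \<in> (n <#\<^bsub>H\<^esub> Z) \<inter> S"
          then obtain z where z: "z \<in> Z" "x \<in> S" "x = n \<otimes>\<^bsub>H\<^esub> z" unfolding l_coset_def by blast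
          have zc: "z \<in> carrier H" using z Zc by blast
          have "z = inv\<^bsub>H\<^esub> n \<otimes>\<^bsub>H\<^esub> x" using z(3) zc nc by (simp add: H.m_assoc[symmetric])
          moreover have "inv\<^bsub>H\<^esub> n \<otimes>\<^bsub>H\<^esub> x \<in> S"
            using S_inv[OF nS] z(2) Ssub yb unfolding S_def by (auto simp: act_mult)
          ultimately show "x \<in> n <#\<^bsub>H\<^esub> (Z \<inter> S)" using z unfolding l_coset_def by blast
        qed
      qed
      have "F (g <#\<^bsub>H\<^esub> A) y = m (n <#\<^bsub>H\<^esub> (Z \<inter> S))"
        unfolding F_def a_def[symmetric] using e1 e2 by simp
      also have "\<dots> = m (Z \<inter> S)" using m(2)[OF nS] by simp
      also have "\<dots> = F A y'" unfolding F_def Z_def b_def by simp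
      finally show ?thesis unfolding y'_def .
    qed
    have "\<nu>.I (F (g <#\<^bsub>H\<^esub> A)) = \<nu>.I (\<lambda>y. F A (act (inv\<^bsub>H\<^esub> g) y))"
      using pt by (intro \<nu>.I_cong) blast
    also have "\<dots> = \<nu>.I (F A)"
      by (rule \<nu>.I_invariant[OF Fb]) (use act_in[OF ig] inv[OF ig] in auto)
    finally show "\<nu>.I (F (g <#\<^bsub>H\<^esub> A)) = \<nu>.I (F A)" .
  qed
qed

section \<open>Cluster points of means\<close>

lemma cluster_point:
  fixes s :: "nat \<Rightarrow> ('x \<Rightarrow> real)"
  assumes "\<And>n x. 0 \<le> s n x \<and> s n x \<le> 1"
  shows "\<exists>\<mu>. \<forall>Z. closed Z \<longrightarrow> (\<forall>\<^sub>F n in sequentially. s n \<in> Z) \<longrightarrow> \<mu> \<in> Z"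
proof -
  define K :: "('x \<Rightarrow> real) set" where "K = PiE UNIV (\<lambda>_. {0..1})"
  have "compactin (product_topology (\<lambda>_. euclidean) UNIV) K"
    unfolding K_def compactin_PiE by simp
  then have cK: "compact K" by (simp add: euclidean_product_topology)
  define F where "F = filtermap s sequentially"
  have Fnb: "F \<noteq> bot" unfolding F_def by (simp add: filtermap_bot_iff)
  have "eventually (\<lambda>x. x \<in> K) F" unfolding F_def eventually_filtermap K_def
    using assms by (simp add: PiE_UNIV_domain)
  then obtain \<mu> where \<mu>: "\<mu> \<in> K" "inf (nhds \<mu>) F \<noteq> bot"
    using cK Fnb unfolding compact_filter by blast
  show ?thesis
  proof (intro exI allI impI)
    fix Z :: "('x \<Rightarrow> real) set" assume Z: "closed Z" "\<forall>\<^sub>F n in sequentially. s n \<in> Z"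
    show "\<mu> \<in> Z"
    proof (rule ccontr)
      assume "\<mu> \<notin> Z"
      then have "eventually (\<lambda>x. x \<in> - Z) (nhds \<mu>)" using Z(1) by (intro eventually_nhds_in_open) auto
      moreover have "eventually (\<lambda>x. x \<in> Z) F" unfolding F_def eventually_filtermap using Z(2) .
      ultimately have "eventually (\<lambda>x. False) (inf (nhds \<mu>) F)"
        unfolding eventually_inf by blast
      then show False using \<mu>(2) by (simp add: eventually_False)
    qed
  qed
qed



locale odo =
  fixes G :: "('a, 'b) monoid_scheme" and Gs :: "nat \<Rightarrow> 'a set"
  assumes grp: "group G"
    and nrm: "\<And>n. Gs n \<lhd> G"
    and fin: "\<And>n. finite (rcosets\<^bsub>G\<^esub> (Gs n))"
    and decr: "\<And>n. Gs (Suc n) \<subseteq> Gs n"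
    and free: "\<And>g x. g \<in> carrier G \<Longrightarrow> x \<in> odometer_space G Gs \<Longrightarrow>
                 odometer_action G g x = x \<Longrightarrow> g = \<one>\<^bsub>G\<^esub>"
begin

interpretation G: group G by (rule grp)

abbreviation "X \<equiv> odometer_space G Gs"
abbreviation "R n \<equiv> rcosets\<^bsub>G\<^esub> (Gs n)"
abbreviation "act \<equiv> odometer_action G"

lemma cancel1 [simp]: "g \<in> carrier G \<Longrightarrow> a \<in> carrier G \<Longrightarrow> inv\<^bsub>G\<^esub> g \<otimes>\<^bsub>G\<^esub> (g \<otimes>\<^bsub>G\<^esub> a) = a"
  by (simp add: G.m_assoc[symmetric])

lemma cancel2 [simp]: "g \<in> carrier G \<Longrightarrow> a \<in> carrier G \<Longrightarrow> g \<otimes>\<^bsub>G\<^esub> (inv\<^bsub>G\<^esub> g \<otimes>\<^bsub>G\<^esub> a) = a"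
  by (simp add: G.m_assoc[symmetric])

lemma sg: "subgroup (Gs n) G"
  using nrm normal_imp_subgroup by blast

lemma Gs_sub: "Gs n \<subseteq> carrier G"
  using sg subgroup.subset by blast

lemma R_cases: assumes "C \<in> R n" obtains a where "a \<in> carrier G" "C = Gs n #>\<^bsub>G\<^esub> a"
  using assms unfolding RCOSETS_def by blast

lemma R_sub: "C \<in> R n \<Longrightarrow> C \<subseteq> carrier G"
  by (metis R_cases G.r_coset_subset_G Gs_sub)

lemma R_ne: "C \<in> R n \<Longrightarrow> C \<noteq> {}"
  by (metis R_cases G.rcos_self sg empty_iff)

lemma R_eq: "C \<in> R n \<Longrightarrow> D \<in> R n \<Longrightarrow> C \<inter> D \<noteq> {} \<Longrightarrow> C = D"
  using G.rcos_disjoint[OF sg] unfolding pairwise_def disjnt_def by blast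

lemma lcos_rcos: assumes "g \<in> carrier G" "a \<in> carrier G"
  shows "g <#\<^bsub>G\<^esub> (Gs n #>\<^bsub>G\<^esub> a) = Gs n #>\<^bsub>G\<^esub> (g \<otimes>\<^bsub>G\<^esub> a)"
proof -
  interpret N: normal "Gs n" G by (rule nrm)
  show ?thesis
  proof
    show "g <#\<^bsub>G\<^esub> (Gs n #>\<^bsub>G\<^esub> a) \<subseteq> Gs n #>\<^bsub>G\<^esub> (g \<otimes>\<^bsub>G\<^esub> a)"
    proof
      fix x assume "x \<in> g <#\<^bsub>G\<^esub> (Gs n #>\<^bsub>G\<^esub> a)"
      then obtain k where k: "k \<in> Gs n" "x = g \<otimes>\<^bsub>G\<^esub> (k \<otimes>\<^bsub>G\<^esub> a)"
        unfolding l_coset_def r_coset_def by blast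
      have kc: "k \<in> carrier G" using k Gs_sub by blast
      have "x = (g \<otimes>\<^bsub>G\<^esub> k \<otimes>\<^bsub>G\<^esub> inv\<^bsub>G\<^esub> g) \<otimes>\<^bsub>G\<^esub> (g \<otimes>\<^bsub>G\<^esub> a)"
        using k kc assms by (simp add: G.m_assoc)
      moreover have "g \<otimes>\<^bsub>G\<^esub> k \<otimes>\<^bsub>G\<^esub> inv\<^bsub>G\<^esub> g \<in> Gs n" using N.inv_op_closed2 assms k by blast
      ultimately show "x \<in> Gs n #>\<^bsub>G\<^esub> (g \<otimes>\<^bsub>G\<^esub> a)" unfolding r_coset_def by blast
    qed
    show "Gs n #>\<^bsub>G\<^esub> (g \<otimes>\<^bsub>G\<^esub> a) \<subseteq> g <#\<^bsub>G\<^esub> (Gs n #>\<^bsub>G\<^esub> a)"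
    proof
      fix x assume "x \<in> Gs n #>\<^bsub>G\<^esub> (g \<otimes>\<^bsub>G\<^esub> a)"
      then obtain k where k: "k \<in> Gs n" "x = k \<otimes>\<^bsub>G\<^esub> (g \<otimes>\<^bsub>G\<^esub> a)"
        unfolding r_coset_def by blast
      have kc: "k \<in> carrier G" using k Gs_sub by blast
      have "x = g \<otimes>\<^bsub>G\<^esub> ((inv\<^bsub>G\<^esub> g \<otimes>\<^bsub>G\<^esub> k \<otimes>\<^bsub>G\<^esub> g) \<otimes>\<^bsub>G\<^esub> a)"
        using k kc assms by (simp add: G.m_assoc[symmetric])
      moreover have "inv\<^bsub>G\<^esub> g \<otimes>\<^bsub>G\<^esub> k \<otimes>\<^bsub>G\<^esub> g \<in> Gs n" using N.inv_op_closed1 assms k by blast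
      ultimately show "x \<in> g <#\<^bsub>G\<^esub> (Gs n #>\<^bsub>G\<^esub> a)" unfolding r_coset_def l_coset_def by blast
    qed
  qed
qed

lemma lcos_R: "g \<in> carrier G \<Longrightarrow> C \<in> R n \<Longrightarrow> g <#\<^bsub>G\<^esub> C \<in> R n"
  by (metis R_cases lcos_rcos G.m_closed G.rcosetsI Gs_sub)

lemma lcos_mono: "A \<subseteq> B \<Longrightarrow> g <#\<^bsub>G\<^esub> A \<subseteq> g <#\<^bsub>G\<^esub> B"
  unfolding l_coset_def by blast

lemma X_iff: "x \<in> X \<longleftrightarrow> (\<forall>n. x n \<in> R n) \<and> (\<forall>n. x (Suc n) \<subseteq> x n)"
  unfolding odometer_space_def by simp

lemma X_mono: assumes "x \<in> X" "m \<le> n" shows "x n \<subseteq> x m"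
  using assms(2)
proof (induction n rule: dec_induct)
  case (step k)
  then show ?case using assms(1) unfolding X_iff by blast
qed simp

lemma X_agree: assumes "x \<in> X" "y \<in> X" "y n = x n" "m \<le> n" shows "y m = x m"
proof (rule R_eq)
  show "y m \<in> R m" "x m \<in> R m" using assms X_iff by auto
  have "x n \<noteq> {}" using assms X_iff R_ne by blast
  moreover have "x n \<subseteq> y m" "x n \<subseteq> x m" using X_mono assms by (metis, metis)
  ultimately show "y m \<inter> x m \<noteq> {}" by blast
qed

lemma act_X: "g \<in> carrier G \<Longrightarrow> x \<in> X \<Longrightarrow> act g x \<in> X"
  unfolding X_iff odometer_action_def using lcos_R lcos_mono by blast

lemma act_n: "act g x n = g <#\<^bsub>G\<^esub> x n"
  by (simp add: odometer_action_def)

lemma X_sub: "x \<in> X \<Longrightarrow> x n \<subseteq> carrier G"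
  using R_sub X_iff by blast

lemma act_mult: "g \<in> carrier G \<Longrightarrow> h \<in> carrier G \<Longrightarrow> x \<in> X \<Longrightarrow> act (g \<otimes>\<^bsub>G\<^esub> h) x = act g (act h x)"
  unfolding odometer_action_def by (rule ext) (simp add: G.lcos_m_assoc X_sub)

lemma act_one: "x \<in> X \<Longrightarrow> act \<one>\<^bsub>G\<^esub> x = x"
  unfolding odometer_action_def by (rule ext) (simp add: G.lcos_mult_one X_sub)

lemma act_inv: "g \<in> carrier G \<Longrightarrow> x \<in> X \<Longrightarrow> act (inv\<^bsub>G\<^esub> g) (act g x) = x"
  using act_mult[of "inv\<^bsub>G\<^esub> g" g x] act_one by simp

lemma act_inv2: "g \<in> carrier G \<Longrightarrow> x \<in> X \<Longrightarrow> act g (act (inv\<^bsub>G\<^esub> g) x) = x"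
  using act_mult[of g "inv\<^bsub>G\<^esub> g" x] act_one by simp

lemma act_unique: assumes "g \<in> carrier G" "h \<in> carrier G" "x \<in> X" "act g x = act h x" shows "g = h"
proof -
  have "act (inv\<^bsub>G\<^esub> h \<otimes>\<^bsub>G\<^esub> g) x = x"
    using assms act_mult act_inv by (metis G.inv_closed)
  then have "inv\<^bsub>G\<^esub> h \<otimes>\<^bsub>G\<^esub> g = \<one>\<^bsub>G\<^esub>" using free assms by simp
  then show ?thesis using assms by (metis G.inv_closed G.inv_inv G.inv_solve_left G.r_one G.one_closed)
qed

lemma Gs_R: "Gs n \<in> R n"
  using G.rcosetsI[OF Gs_sub G.one_closed] G.coset_mult_one[OF Gs_sub] by simp

lemma X_ne: "(\<lambda>n. Gs n) \<in> X"
  unfolding X_iff using Gs_R decr by auto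

definition pt :: "nat \<Rightarrow> 'a set \<Rightarrow> nat \<Rightarrow> 'a set" where
  "pt n C = (\<lambda>m. Gs m #>\<^bsub>G\<^esub> (SOME a. a \<in> carrier G \<and> C = Gs n #>\<^bsub>G\<^esub> a))"

lemma pt: assumes "C \<in> R n" shows "pt n C \<in> X" "pt n C n = C"
proof -
  have "\<exists>a. a \<in> carrier G \<and> C = Gs n #>\<^bsub>G\<^esub> a" using assms by (blast elim: R_cases)
  then have a: "(SOME a. a \<in> carrier G \<and> C = Gs n #>\<^bsub>G\<^esub> a) \<in> carrier G \<and>
     C = Gs n #>\<^bsub>G\<^esub> (SOME a. a \<in> carrier G \<and> C = Gs n #>\<^bsub>G\<^esub> a)" by (rule someI_ex)
  show "pt n C n = C" unfolding pt_def using a by simp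
  show "pt n C \<in> X" unfolding pt_def X_iff
  proof (intro conjI allI)
    fix m
    show "Gs m #>\<^bsub>G\<^esub> (SOME a. a \<in> carrier G \<and> C = Gs n #>\<^bsub>G\<^esub> a) \<in> R m"
      using a G.rcosetsI[OF Gs_sub] by blast
    show "Gs (Suc m) #>\<^bsub>G\<^esub> (SOME a. a \<in> carrier G \<and> C = Gs n #>\<^bsub>G\<^esub> a) \<subseteq> Gs m #>\<^bsub>G\<^esub> (SOME a. a \<in> carrier G \<and> C = Gs n #>\<^bsub>G\<^esub> a)"
      using decr unfolding r_coset_def by blast
  qed
qed

end



context odo
begin

interpretation G: group G by (rule grp)

abbreviation "P \<equiv> product_topology (\<lambda>n. discrete_topology (R n)) UNIV"
abbreviation "T \<equiv> odometer_topology G Gs"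

lemma T_def': "T = subtopology P X"
  by (simp add: odometer_topology_def)

lemma X_topP: "X \<subseteq> topspace P"
  using X_iff by (auto simp: PiE_UNIV_domain)

lemma topT: "topspace T = X"
  using X_topP by (auto simp: T_def')

definition cyl :: "nat \<Rightarrow> (nat \<Rightarrow> 'a set) \<Rightarrow> (nat \<Rightarrow> 'a set) set" where
  "cyl n x = {y \<in> X. y n = x n}"

lemma proj_cont: "continuous_map T (discrete_topology (R k)) (\<lambda>x. x k)"
  unfolding T_def' by (intro continuous_map_from_subtopology continuous_map_product_projection) simp

lemma cyl_open: assumes "x \<in> X" shows "openin T (cyl n x)"
proof -
  have "openin T {y \<in> topspace T. y n \<in> {x n}}"
    using openin_continuous_map_preimage[OF proj_cont[of n], of "{x n}"] assms X_iff by auto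
  moreover have "{y \<in> topspace T. y n \<in> {x n}} = cyl n x" unfolding topT cyl_def by auto
  ultimately show ?thesis by simp
qed

lemma cyl_closed: assumes "x \<in> X" shows "closedin T (cyl n x)"
proof -
  have "closedin T {y \<in> topspace T. y n \<in> {x n}}"
    using closedin_continuous_map_preimage[OF proj_cont[of n], of "{x n}"] assms X_iff by auto
  moreover have "{y \<in> topspace T. y n \<in> {x n}} = cyl n x" unfolding topT cyl_def by auto
  ultimately show ?thesis by simp
qed

lemma cyl_self: "x \<in> X \<Longrightarrow> x \<in> cyl n x"
  unfolding cyl_def by simp

lemma cyl_shrink: assumes "x \<in> X" "m \<le> n" shows "cyl n x \<subseteq> cyl m x"
  unfolding cyl_def using X_agree assms by blast

lemma cyl_eq: assumes "y \<in> cyl n x" shows "cyl n y = cyl n x"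
  using assms unfolding cyl_def by auto

lemma act_cont: assumes g: "g \<in> carrier G" shows "continuous_map T T (act g)"
proof -
  have "continuous_map T P (act g)"
    unfolding continuous_map_componentwise_UNIV act_n
  proof
    fix k
    have c: "continuous_map (discrete_topology (R k)) (discrete_topology (R k)) (\<lambda>C. g <#\<^bsub>G\<^esub> C)"
      using lcos_R[OF g] by auto
    show "continuous_map T (discrete_topology (R k)) (\<lambda>x. g <#\<^bsub>G\<^esub> x k)"
      using continuous_map_compose[OF proj_cont[of k] c] by (simp add: o_def)
  qed
  moreover have "act g \<in> topspace T \<rightarrow> X" using act_X g topT by auto
  ultimately show ?thesis unfolding T_def' by (simp add: continuous_map_in_subtopology continuous_map_from_subtopology)
qed

lemma compactT: "compact_space T"
proof -
  have cP: "compact_space P"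
    using fin by (simp add: compact_space_product_topology compact_space_discrete_topology)
  define S where "S n = {x \<in> topspace P. (x (Suc n), x n) \<in> {(a, b). a \<subseteq> b} \<inter> (R (Suc n) \<times> R n)}" for n
  have "closedin P (S n)" for n
  proof -
    have "continuous_map P (prod_topology (discrete_topology (R (Suc n))) (discrete_topology (R n)))
        (\<lambda>x. (x (Suc n), x n))"
      by (intro continuous_map_pairedI continuous_map_product_projection) auto
    then have "continuous_map P (discrete_topology (R (Suc n) \<times> R n)) (\<lambda>x. (x (Suc n), x n))"
      by (simp add: prod_topology_discrete_topology)
    then show ?thesis unfolding S_def by (rule closedin_continuous_map_preimage) auto
  qed
  then have "closedin P (\<Inter>n. S n)" by (intro closedin_INT) auto
  moreover have "(\<Inter>n. S n) = X"
  proof (intro equalityI subsetI)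
    fix x assume "x \<in> (\<Inter>n. S n)"
    then have "x \<in> topspace P" "\<forall>n. x (Suc n) \<subseteq> x n" unfolding S_def by auto
    then show "x \<in> X" unfolding X_iff by (simp add: PiE_UNIV_domain Pi_iff)
  next
    fix x assume x: "x \<in> X"
    have "x \<in> S n" for n using x X_topP unfolding S_def X_iff by auto
    then show "x \<in> (\<Inter>n. S n)" by blast
  qed
  ultimately have "compactin P X" using closedin_compact_space[OF cP] by simp
  then show ?thesis unfolding T_def' by (rule compact_space_subtopology)
qed

lemma open_cyl_inside: assumes "openin T U" "x \<in> U" shows "\<exists>N. cyl N x \<subseteq> U"
proof -
  obtain W where W: "openin P W" "U = W \<inter> X" using assms(1) unfolding T_def' openin_subtopology by blast
  have xX: "x \<in> X" "x \<in> W" using W assms(2) by auto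
  have "\<exists>V. finite {i \<in> UNIV. V i \<noteq> topspace (discrete_topology (R i))} \<and>
         (\<forall>i \<in> UNIV. openin (discrete_topology (R i)) (V i)) \<and> x \<in> Pi\<^sub>E UNIV V \<and> Pi\<^sub>E UNIV V \<subseteq> W"
    using bspec[OF W(1)[unfolded openin_product_topology_alt] xX(2)] .
  then obtain V where V0: "finite {i \<in> UNIV. V i \<noteq> topspace (discrete_topology (R i))}"
      "x \<in> Pi\<^sub>E UNIV V" "Pi\<^sub>E UNIV V \<subseteq> W"
    by blast
  have V: "finite {i. V i \<noteq> R i}" "x \<in> Pi\<^sub>E UNIV V" "Pi\<^sub>E UNIV V \<subseteq> W"
    using V0 by simp_all
  define N where "N = Max (insert 0 {i. V i \<noteq> R i})"
  have N: "i \<le> N" if "V i \<noteq> R i" for i unfolding N_def using V(1) that by auto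
  have "cyl N x \<subseteq> Pi\<^sub>E UNIV V"
  proof
    fix y assume y: "y \<in> cyl N x"
    have "y i \<in> V i" for i
    proof (cases "V i = R i")
      case True
      have "y \<in> X" using y unfolding cyl_def by blast
      then show ?thesis using True unfolding X_iff by simp
    next
      case False
      have "y \<in> X" "y N = x N" using y unfolding cyl_def by auto
      then have "y i = x i" using X_agree[of x y N i] N[OF False] xX by blast
      then show ?thesis using V(2) by (simp add: PiE_UNIV_domain Pi_iff)
    qed
    then show "y \<in> Pi\<^sub>E UNIV V" by (simp add: PiE_UNIV_domain)
  qed
  moreover have "cyl N x \<subseteq> X" unfolding cyl_def by blast
  ultimately have "cyl N x \<subseteq> U" using V(3) W(2) by blast
  then show ?thesis by blast
qed

lemma uniform_level:
  assumes loc: "\<forall>x\<in>X. \<exists>U g. openin T U \<and> x \<in> U \<and> g \<in> carrier G \<and> (\<forall>y\<in>U. s y = act g y)"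
  shows "\<exists>N. \<forall>x\<in>X. \<exists>g\<in>carrier G. \<forall>y\<in>cyl N x. s y = act g y"
proof -
  have "\<forall>x\<in>X. \<exists>N g. g \<in> carrier G \<and> (\<forall>y\<in>cyl N x. s y = act g y)"
  proof
    fix x assume x: "x \<in> X"
    obtain U g where U: "openin T U" "x \<in> U" "g \<in> carrier G" "\<forall>y\<in>U. s y = act g y"
      using loc x by blast
    obtain N where "cyl N x \<subseteq> U" using open_cyl_inside[OF U(1,2)] by blast
    then show "\<exists>N g. g \<in> carrier G \<and> (\<forall>y\<in>cyl N x. s y = act g y)" using U(3,4) by blast
  qed
  then have "\<forall>x\<in>X. \<exists>p. snd p \<in> carrier G \<and> (\<forall>y\<in>cyl (fst p) x. s y = act (snd p) y)" by simp
  then obtain p where p: "\<forall>x\<in>X. snd (p x) \<in> carrier G \<and> (\<forall>y\<in>cyl (fst (p x)) x. s y = act (snd (p x)) y)"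
    by (rule bchoice[THEN exE]) blast
  define N where "N x = fst (p x)" for x
  define g where "g x = snd (p x)" for x
  have Ng: "\<forall>x\<in>X. g x \<in> carrier G \<and> (\<forall>y\<in>cyl (N x) x. s y = act (g x) y)" using p unfolding N_def g_def by blast
  have "\<forall>U\<in>(\<lambda>x. cyl (N x) x) ` X. openin T U" using cyl_open by auto
  moreover have "topspace T \<subseteq> \<Union>((\<lambda>x. cyl (N x) x) ` X)" using topT cyl_self by auto
  ultimately have "\<exists>F. finite F \<and> F \<subseteq> (\<lambda>x. cyl (N x) x) ` X \<and> topspace T \<subseteq> \<Union>F"
    using compactT[unfolded compact_space_alt, rule_format, of "(\<lambda>x. cyl (N x) x) ` X"] by blast
  then obtain F where F: "finite F" "F \<subseteq> (\<lambda>x. cyl (N x) x) ` X" "topspace T \<subseteq> \<Union>F"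
    by blast
  obtain C where C: "C \<subseteq> X" "finite C" "F = (\<lambda>x. cyl (N x) x) ` C"
    using finite_subset_image[OF F(1) F(2)] by blast
  define M where "M = Max (insert 0 (N ` C))"
  have M: "N c \<le> M" if "c \<in> C" for c unfolding M_def using C(2) that by auto
  show ?thesis
  proof (intro exI ballI)
    fix x assume x: "x \<in> X"
    then obtain c where c: "c \<in> C" "x \<in> cyl (N c) c" using F(3) C(3) topT by auto
    have "cyl M x \<subseteq> cyl (N c) x" using cyl_shrink[OF x M[OF c(1)]] .
    also have "\<dots> = cyl (N c) c" using cyl_eq[OF c(2)] .
    finally show "\<exists>g\<in>carrier G. \<forall>y\<in>cyl M x. s y = act g y" using Ng c C(1) by blast
  qed
qed

end



context odo
begin

interpretation G: group G by (rule grp)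

abbreviation "H \<equiv> topological_full_group G Gs"

definition locg :: "((nat \<Rightarrow> 'a set) \<Rightarrow> (nat \<Rightarrow> 'a set)) \<Rightarrow> bool" where
  "locg s \<longleftrightarrow> (\<forall>x\<in>X. \<exists>U g. openin T U \<and> closedin T U \<and> x \<in> U \<and> g \<in> carrier G \<and> (\<forall>y\<in>U. s y = act g y))"

lemma carrier_H: "s \<in> carrier H \<longleftrightarrow> homeomorphic_map T T s \<and> (\<forall>x. x \<notin> X \<longrightarrow> s x = x) \<and> locg s"
  unfolding topological_full_group_def locg_def by simp

lemma mult_H [simp]: "s \<otimes>\<^bsub>H\<^esub> t = s \<circ> t"
  unfolding topological_full_group_def by simp

lemma one_H [simp]: "\<one>\<^bsub>H\<^esub> = id"
  unfolding topological_full_group_def by simp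

lemma H_X: "s \<in> carrier H \<Longrightarrow> x \<in> X \<Longrightarrow> s x \<in> X"
  unfolding carrier_H using continuous_map_image_subset_topspace[OF homeomorphic_imp_continuous_map] topT
  by blast

lemma H_out: "s \<in> carrier H \<Longrightarrow> x \<notin> X \<Longrightarrow> s x = x"
  unfolding carrier_H by blast

lemma H_loc: assumes "s \<in> carrier H" "x \<in> X"
  obtains U g where "openin T U" "closedin T U" "x \<in> U" "g \<in> carrier G" "\<forall>y\<in>U. s y = act g y"
  using assms unfolding carrier_H locg_def by blast

lemma H_level: assumes "s \<in> carrier H" shows "\<exists>N. \<forall>x\<in>X. \<exists>g\<in>carrier G. \<forall>y\<in>cyl N x. s y = act g y"
proof (rule uniform_level)
  show "\<forall>x\<in>X. \<exists>U g. openin T U \<and> x \<in> U \<and> g \<in> carrier G \<and> (\<forall>y\<in>U. s y = act g y)"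
  proof
    fix x assume "x \<in> X"
    then obtain U g where "openin T U" "x \<in> U" "g \<in> carrier G" "\<forall>y\<in>U. s y = act g y"
      using H_loc[OF assms] by metis
    then show "\<exists>U g. openin T U \<and> x \<in> U \<and> g \<in> carrier G \<and> (\<forall>y\<in>U. s y = act g y)" by blast
  qed
qed

lemma id_H: "id \<in> carrier H"
proof -
  have "locg id" unfolding locg_def
  proof
    fix x assume x: "x \<in> X"
    have "\<forall>y\<in>X. id y = act \<one>\<^bsub>G\<^esub> y" using act_one by simp
    then show "\<exists>U g. openin T U \<and> closedin T U \<and> x \<in> U \<and> g \<in> carrier G \<and> (\<forall>y\<in>U. id y = act g y)"
      using x openin_topspace[of T] closedin_topspace[of T] unfolding topT
      by (intro exI[of _ X] exI[of _ "\<one>\<^bsub>G\<^esub>"]) simp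
  qed
  then show ?thesis unfolding carrier_H by simp
qed

lemma comp_H: assumes s: "s \<in> carrier H" and t: "t \<in> carrier H" shows "s \<circ> t \<in> carrier H"
proof -
  have hs: "homeomorphic_map T T s" and ht: "homeomorphic_map T T t" using s t unfolding carrier_H by auto
  have "homeomorphic_map T T (s \<circ> t)" using homeomorphic_map_compose[OF ht hs] .
  moreover have "\<forall>x. x \<notin> X \<longrightarrow> (s \<circ> t) x = x" using H_out s t by simp
  moreover have "locg (s \<circ> t)" unfolding locg_def
  proof
    fix x assume x: "x \<in> X"
    obtain U g where U: "openin T U" "closedin T U" "x \<in> U" "g \<in> carrier G" "\<forall>y\<in>U. t y = act g y"
      using H_loc[OF t x] by metis
    have tx: "t x \<in> X" using H_X t x by blast
    obtain V h where V: "openin T V" "closedin T V" "t x \<in> V" "h \<in> carrier G" "\<forall>y\<in>V. s y = act h y"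
      using H_loc[OF s tx] by metis
    define W where "W = U \<inter> {y \<in> topspace T. t y \<in> V}"
    have ct: "continuous_map T T t" using homeomorphic_imp_continuous_map[OF ht] .
    have "openin T W" unfolding W_def using U(1) openin_continuous_map_preimage[OF ct V(1)] by blast
    moreover have "closedin T W" unfolding W_def using U(2) closedin_continuous_map_preimage[OF ct V(2)] by blast
    moreover have "x \<in> W" unfolding W_def using U(3) V(3) x topT by simp
    moreover have "\<forall>y\<in>W. (s \<circ> t) y = act (h \<otimes>\<^bsub>G\<^esub> g) y"
    proof
      fix y assume y: "y \<in> W"
      then have yU: "y \<in> U" "t y \<in> V" "y \<in> X" unfolding W_def topT by auto
      then show "(s \<circ> t) y = act (h \<otimes>\<^bsub>G\<^esub> g) y" using U(4,5) V(4,5) by (simp add: act_mult)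
    qed
    moreover have "h \<otimes>\<^bsub>G\<^esub> g \<in> carrier G" using U(4) V(4) by simp
    ultimately show "\<exists>U g. openin T U \<and> closedin T U \<and> x \<in> U \<and> g \<in> carrier G \<and> (\<forall>y\<in>U. (s \<circ> t) y = act g y)"
      by blast
  qed
  ultimately show ?thesis unfolding carrier_H by blast
qed

lemma inv_ex_H: assumes s: "s \<in> carrier H" shows "\<exists>t\<in>carrier H. t \<circ> s = id"
proof -
  have hs: "homeomorphic_map T T s" using s unfolding carrier_H by auto
  then obtain t where t: "homeomorphic_maps T T s t" using homeomorphic_map_maps by blast
  define t' where "t' x = (if x \<in> X then t x else x)" for x
  have t': "homeomorphic_maps T T s t'" using homeomorphic_maps_eq[OF t, of s t'] unfolding t'_def topT by simp
  then have ht': "homeomorphic_map T T t'" using homeomorphic_map_maps homeomorphic_maps_sym by blast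
  have ts: "t' (s x) = x" if "x \<in> X" for x using t' that topT unfolding homeomorphic_maps_def by auto
  have st: "s (t' x) = x" if "x \<in> X" for x using t' that topT unfolding homeomorphic_maps_def by auto
  have t'X: "t' x \<in> X" if "x \<in> X" for x
    using t' that topT continuous_map_image_subset_topspace unfolding homeomorphic_maps_def by blast
  have "locg t'" unfolding locg_def
  proof
    fix x assume x: "x \<in> X"
    define z where "z = t' x"
    have z: "z \<in> X" "s z = x" using t'X st x unfolding z_def by auto
    obtain U g where U: "openin T U" "closedin T U" "z \<in> U" "g \<in> carrier G" "\<forall>y\<in>U. s y = act g y"
      using H_loc[OF s z(1)] by metis
    have UX: "U \<subseteq> X" using openin_subset[OF U(1)] topT by simp
    have "openin T (s ` U)" using homeomorphic_map_openness[OF hs] U(1) UX topT by simp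
    moreover have "closedin T (s ` U)" using homeomorphic_map_closedness[OF hs] U(2) UX topT by simp
    moreover have "x \<in> s ` U" using z U(3) by blast
    moreover have "\<forall>y\<in>s ` U. t' y = act (inv\<^bsub>G\<^esub> g) y"
    proof
      fix y assume "y \<in> s ` U"
      then obtain u where u: "u \<in> U" "y = s u" by blast
      have "t' y = u" using ts u UX by auto
      also have "\<dots> = act (inv\<^bsub>G\<^esub> g) (act g u)" using act_inv U(4) u UX by auto
      also have "\<dots> = act (inv\<^bsub>G\<^esub> g) y" using U(5) u by simp
      finally show "t' y = act (inv\<^bsub>G\<^esub> g) y" .
    qed
    moreover have "inv\<^bsub>G\<^esub> g \<in> carrier G" using U(4) by simp
    ultimately show "\<exists>U g. openin T U \<and> closedin T U \<and> x \<in> U \<and> g \<in> carrier G \<and> (\<forall>y\<in>U. t' y = act g y)"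
      by blast
  qed
  moreover have "\<forall>x. x \<notin> X \<longrightarrow> t' x = x" unfolding t'_def by simp
  ultimately have "t' \<in> carrier H" using ht' unfolding carrier_H by blast
  moreover have "t' \<circ> s = id"
  proof
    fix x show "(t' \<circ> s) x = id x"
    proof (cases "x \<in> X")
      case True then show ?thesis using ts by simp
    next
      case False then show ?thesis using H_out[OF s False] by (simp add: t'_def)
    qed
  qed
  ultimately show ?thesis by blast
qed

lemma group_H: "group H"
proof (rule groupI)
  show "\<one>\<^bsub>H\<^esub> \<in> carrier H" using id_H by simp
next
  fix x y assume "x \<in> carrier H" "y \<in> carrier H" then show "x \<otimes>\<^bsub>H\<^esub> y \<in> carrier H" using comp_H by simp
next
  fix x y z show "x \<otimes>\<^bsub>H\<^esub> y \<otimes>\<^bsub>H\<^esub> z = x \<otimes>\<^bsub>H\<^esub> (y \<otimes>\<^bsub>H\<^esub> z)" by (simp add: o_assoc)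
next
  fix x show "\<one>\<^bsub>H\<^esub> \<otimes>\<^bsub>H\<^esub> x = x" by simp
next
  fix x assume "x \<in> carrier H" then show "\<exists>y\<in>carrier H. y \<otimes>\<^bsub>H\<^esub> x = \<one>\<^bsub>H\<^esub>" using inv_ex_H by simp
qed

interpretation HH: group H by (rule group_H)

lemma invH: assumes "s \<in> carrier H"
  shows "inv\<^bsub>H\<^esub> s \<in> carrier H" "\<And>x. s ((inv\<^bsub>H\<^esub> s) x) = x" "\<And>x. (inv\<^bsub>H\<^esub> s) (s x) = x"
proof -
  show "inv\<^bsub>H\<^esub> s \<in> carrier H" using assms by simp
  have "s \<circ> inv\<^bsub>H\<^esub> s = id" "inv\<^bsub>H\<^esub> s \<circ> s = id" using HH.r_inv[OF assms] HH.l_inv[OF assms] by simp_all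
  then show "\<And>x. s ((inv\<^bsub>H\<^esub> s) x) = x" "\<And>x. (inv\<^bsub>H\<^esub> s) (s x) = x" by (metis comp_apply id_apply)+
qed

end



context odo
begin

interpretation G: group G by (rule grp)
interpretation HH: group H by (rule group_H)

definition Hn :: "nat \<Rightarrow> ((nat \<Rightarrow> 'a set) \<Rightarrow> (nat \<Rightarrow> 'a set)) set" where
  "Hn n = {s \<in> carrier H. \<forall>x\<in>X. \<exists>g\<in>carrier G. \<forall>y\<in>cyl n x. s y = act g y}"

lemma Hn_eventually: assumes "s \<in> carrier H" shows "\<exists>N. \<forall>n\<ge>N. s \<in> Hn n"
proof -
  obtain N where N: "\<forall>x\<in>X. \<exists>g\<in>carrier G. \<forall>y\<in>cyl N x. s y = act g y" using H_level[OF assms] by blast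
  have "s \<in> Hn n" if "n \<ge> N" for n
    unfolding Hn_def
  proof (intro CollectI conjI ballI)
    fix x assume x: "x \<in> X"
    obtain g where g: "g \<in> carrier G" "\<forall>y\<in>cyl N x. s y = act g y" using N x by blast
    have "cyl n x \<subseteq> cyl N x" using cyl_shrink[OF x that] .
    then show "\<exists>g\<in>carrier G. \<forall>y\<in>cyl n x. s y = act g y" using g by blast
  qed (rule assms)
  then show ?thesis by blast
qed

lemma Hn_loc: assumes "s \<in> Hn n" "x \<in> X" obtains g where "g \<in> carrier G" "\<forall>y\<in>cyl n x. s y = act g y"
  using assms unfolding Hn_def by blast

lemma Hn_H: "s \<in> Hn n \<Longrightarrow> s \<in> carrier H"
  unfolding Hn_def by blast

lemma act_cyl: assumes "g \<in> carrier G" "y \<in> cyl n x" "x \<in> X" shows "act g y \<in> cyl n (act g x)"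
proof -
  have "y \<in> X" "y n = x n" using assms(2) unfolding cyl_def by auto
  then show ?thesis using act_X[OF assms(1)] unfolding cyl_def by (simp add: act_n)
qed

lemma Hn_sub: "subgroup (Hn n) H"
proof (rule HH.subgroupI)
  show "Hn n \<subseteq> carrier H" using Hn_H by blast
  have "\<forall>x\<in>X. \<exists>g\<in>carrier G. \<forall>y\<in>cyl n x. id y = act g y"
  proof (intro ballI bexI[of _ "\<one>\<^bsub>G\<^esub>"])
    fix x y assume "y \<in> cyl n x"
    then have "y \<in> X" unfolding cyl_def by blast
    then show "id y = act \<one>\<^bsub>G\<^esub> y" using act_one by simp
  qed simp
  then have "id \<in> Hn n" unfolding Hn_def using id_H by (intro CollectI conjI)
  then show "Hn n \<noteq> {}" by blast
next
  fix s t assume s: "s \<in> Hn n" and t: "t \<in> Hn n"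
  have "s \<circ> t \<in> Hn n" unfolding Hn_def
  proof (intro CollectI conjI ballI)
    show "s \<circ> t \<in> carrier H" using comp_H Hn_H s t by blast
    fix x assume x: "x \<in> X"
    obtain g where g: "g \<in> carrier G" "\<forall>y\<in>cyl n x. t y = act g y" using Hn_loc[OF t x] by blast
    have tx: "t x \<in> X" using H_X Hn_H t x by blast
    obtain h where h: "h \<in> carrier G" "\<forall>y\<in>cyl n (t x). s y = act h y" using Hn_loc[OF s tx] by blast
    have "\<forall>y\<in>cyl n x. (s \<circ> t) y = act (h \<otimes>\<^bsub>G\<^esub> g) y"
    proof
      fix y assume y: "y \<in> cyl n x"
      have yX: "y \<in> X" using y unfolding cyl_def by blast
      have "t y \<in> cyl n (t x)" using act_cyl[OF g(1) y x] g(2) y cyl_self[OF x] by simp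
      then show "(s \<circ> t) y = act (h \<otimes>\<^bsub>G\<^esub> g) y" using h g y yX by (simp add: act_mult)
    qed
    then show "\<exists>g\<in>carrier G. \<forall>y\<in>cyl n x. (s \<circ> t) y = act g y" using g(1) h(1) by blast
  qed
  then show "s \<otimes>\<^bsub>H\<^esub> t \<in> Hn n" by simp
next
  fix s assume s: "s \<in> Hn n"
  have sH: "s \<in> carrier H" using Hn_H s by blast
  define t where "t = inv\<^bsub>H\<^esub> s"
  have tH: "t \<in> carrier H" and st: "\<And>x. s (t x) = x" and ts: "\<And>x. t (s x) = x"
    using invH[OF sH] unfolding t_def by auto
  have "t \<in> Hn n" unfolding Hn_def
  proof (intro CollectI conjI ballI)
    show "t \<in> carrier H" by (rule tH)
    fix x assume x: "x \<in> X"
    define z where "z = t x"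
    have z: "z \<in> X" "s z = x" unfolding z_def using H_X[OF tH x] st by auto
    obtain g where g: "g \<in> carrier G" "\<forall>y\<in>cyl n z. s y = act g y" using Hn_loc[OF s z(1)] by blast
    have xz: "act (inv\<^bsub>G\<^esub> g) x = z" using g cyl_self[OF z(1)] z act_inv by auto
    have "\<forall>y\<in>cyl n x. t y = act (inv\<^bsub>G\<^esub> g) y"
    proof
      fix y assume y: "y \<in> cyl n x"
      have yX: "y \<in> X" using y unfolding cyl_def by blast
      have "act (inv\<^bsub>G\<^esub> g) y \<in> cyl n z" using act_cyl[OF _ y x, of "inv\<^bsub>G\<^esub> g"] g xz by simp
      then have "s (act (inv\<^bsub>G\<^esub> g) y) = y" using g act_inv2 yX by simp
      then show "t y = act (inv\<^bsub>G\<^esub> g) y" using ts by metis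
    qed
    then show "\<exists>g\<in>carrier G. \<forall>y\<in>cyl n x. t y = act g y" using g(1) by blast
  qed
  then show "inv\<^bsub>H\<^esub> s \<in> Hn n" unfolding t_def .
qed

lemma Hn_mult: "s \<in> Hn n \<Longrightarrow> t \<in> Hn n \<Longrightarrow> s \<circ> t \<in> Hn n"
  using subgroup.m_closed[OF Hn_sub] by fastforce

lemma Hn_inv: "s \<in> Hn n \<Longrightarrow> inv\<^bsub>H\<^esub> s \<in> Hn n"
  using subgroup.m_inv_closed[OF Hn_sub] by blast

lemma id_Hn: "id \<in> Hn n"
  using subgroup.one_closed[OF Hn_sub] by simp

definition cact :: "nat \<Rightarrow> ((nat \<Rightarrow> 'a set) \<Rightarrow> (nat \<Rightarrow> 'a set)) \<Rightarrow> 'a set \<Rightarrow> 'a set" where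
  "cact n s C = s (pt n C) n"

lemma cact_eq: assumes s: "s \<in> Hn n" and y: "y \<in> X" shows "s y n = cact n s (y n)"
proof -
  have yR: "y n \<in> R n" using y X_iff by blast
  have p: "pt n (y n) \<in> cyl n y" using pt[OF yR] unfolding cyl_def by simp
  obtain g where g: "g \<in> carrier G" "\<forall>z\<in>cyl n y. s z = act g z" using Hn_loc[OF s y] by blast
  have "s y n = g <#\<^bsub>G\<^esub> y n" using g cyl_self[OF y] by (simp add: act_n)
  also have "\<dots> = g <#\<^bsub>G\<^esub> pt n (y n) n" using pt[OF yR] by simp
  also have "\<dots> = cact n s (y n)" unfolding cact_def using g p by (simp add: act_n)
  finally show ?thesis .
qed

lemma cact_R: "s \<in> Hn n \<Longrightarrow> C \<in> R n \<Longrightarrow> cact n s C \<in> R n"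
  unfolding cact_def using H_X[OF Hn_H pt(1)] X_iff by blast

lemma cact_mult: assumes "s \<in> Hn n" "t \<in> Hn n" "C \<in> R n"
  shows "cact n (s \<circ> t) C = cact n s (cact n t C)"
proof -
  have "t (pt n C) \<in> X" using H_X[OF Hn_H[OF assms(2)] pt(1)[OF assms(3)]] .
  then show ?thesis unfolding cact_def[of n "s \<circ> t"] using cact_eq[OF assms(1)] by (simp add: cact_def)
qed

lemma cact_id: "C \<in> R n \<Longrightarrow> cact n id C = C"
  unfolding cact_def using pt by simp

section \<open>Subgroups fixing cylinders\<close>

definition TD :: "nat \<Rightarrow> 'a set set \<Rightarrow> ((nat \<Rightarrow> 'a set) \<Rightarrow> (nat \<Rightarrow> 'a set)) set" where
  "TD n D = {s \<in> Hn n. \<forall>y\<in>X. y n \<in> D \<longrightarrow> s y = y}"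

lemma TD_sub: "subgroup (TD n D) H"
proof (rule HH.subgroupI)
  show "TD n D \<subseteq> carrier H" unfolding TD_def using Hn_H by blast
  have "id \<in> TD n D" unfolding TD_def using id_Hn by simp
  then show "TD n D \<noteq> {}" by blast
next
  fix s t assume "s \<in> TD n D" "t \<in> TD n D"
  then show "s \<otimes>\<^bsub>H\<^esub> t \<in> TD n D" unfolding TD_def using Hn_mult by auto
next
  fix s assume s: "s \<in> TD n D"
  have sH: "s \<in> carrier H" using s Hn_H unfolding TD_def by blast
  have "(inv\<^bsub>H\<^esub> s) y = y" if "y \<in> X" "y n \<in> D" for y
    using s that invH(3)[OF sH, of y] unfolding TD_def by auto
  then show "inv\<^bsub>H\<^esub> s \<in> TD n D" unfolding TD_def using Hn_inv s unfolding TD_def by blast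
qed

lemma TD_Hn: "s \<in> TD n D \<Longrightarrow> s \<in> Hn n"
  unfolding TD_def by blast

lemma TD_mult: "s \<in> TD n D \<Longrightarrow> t \<in> TD n D \<Longrightarrow> s \<circ> t \<in> TD n D"
  using subgroup.m_closed[OF TD_sub] by fastforce

lemma TD_inv: "s \<in> TD n D \<Longrightarrow> inv\<^bsub>H\<^esub> s \<in> TD n D"
  using subgroup.m_inv_closed[OF TD_sub] by blast

lemma id_TD: "id \<in> TD n D"
  using subgroup.one_closed[OF TD_sub] by simp

definition gam :: "nat \<Rightarrow> 'a set \<Rightarrow> ((nat \<Rightarrow> 'a set) \<Rightarrow> (nat \<Rightarrow> 'a set)) \<Rightarrow> 'a" where
  "gam n C s = (THE g. g \<in> carrier G \<and> (\<forall>y\<in>X. y n = C \<longrightarrow> s y = act g y))"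

lemma gam: assumes s: "s \<in> Hn n" and C: "C \<in> R n"
  shows "gam n C s \<in> carrier G" "\<forall>y\<in>X. y n = C \<longrightarrow> s y = act (gam n C s) y"
proof -
  have p: "pt n C \<in> X" "pt n C n = C" using pt[OF C] by auto
  obtain g where g: "g \<in> carrier G" "\<forall>y\<in>cyl n (pt n C). s y = act g y" using Hn_loc[OF s p(1)] by blast
  have ex: "g \<in> carrier G \<and> (\<forall>y\<in>X. y n = C \<longrightarrow> s y = act g y)" using g p unfolding cyl_def by auto
  have un: "h = g" if "h \<in> carrier G \<and> (\<forall>y\<in>X. y n = C \<longrightarrow> s y = act h y)" for h
    using act_unique[of h g "pt n C"] that ex p by auto
  have "gam n C s = g" unfolding gam_def using ex un by (rule the_equality)
  then show "gam n C s \<in> carrier G" "\<forall>y\<in>X. y n = C \<longrightarrow> s y = act (gam n C s) y" using ex by auto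
qed

lemma gam_unique: assumes s: "s \<in> Hn n" and C: "C \<in> R n" and g: "g \<in> carrier G"
    and h: "\<forall>y\<in>X. y n = C \<longrightarrow> s y = act g y"
  shows "gam n C s = g"
proof -
  have p: "pt n C \<in> X" "pt n C n = C" using pt[OF C] by auto
  show ?thesis using act_unique[of "gam n C s" g "pt n C"] gam[OF s C] g h p by auto
qed

end



context odo
begin

interpretation G: group G by (rule grp)
interpretation HH: group H by (rule group_H)

definition Stb :: "nat \<Rightarrow> 'a set set \<Rightarrow> 'a set \<Rightarrow> ((nat \<Rightarrow> 'a set) \<Rightarrow> (nat \<Rightarrow> 'a set)) set" where
  "Stb n D C = {s \<in> TD n D. cact n s C = C}"

lemma Stb_sub: assumes C: "C \<in> R n" shows "subgroup (Stb n D C) H"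
proof (rule HH.subgroupI)
  show "Stb n D C \<subseteq> carrier H" unfolding Stb_def using TD_Hn Hn_H by blast
  have "id \<in> Stb n D C" unfolding Stb_def using id_TD cact_id[OF C] by simp
  then show "Stb n D C \<noteq> {}" by blast
next
  fix s t assume s: "s \<in> Stb n D C" and t: "t \<in> Stb n D C"
  have st: "s \<in> TD n D" "t \<in> TD n D" "cact n s C = C" "cact n t C = C" using s t unfolding Stb_def by auto
  then have "cact n (s \<circ> t) C = C" using cact_mult[OF TD_Hn[OF st(1)] TD_Hn[OF st(2)] C] by simp
  then show "s \<otimes>\<^bsub>H\<^esub> t \<in> Stb n D C" using s t TD_mult unfolding Stb_def by simp
next
  fix s assume s: "s \<in> Stb n D C"
  have sT: "s \<in> TD n D" and sC: "cact n s C = C" using s unfolding Stb_def by auto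
  have iT: "inv\<^bsub>H\<^esub> s \<in> TD n D" using TD_inv[OF sT] .
  have sH: "s \<in> carrier H" using sT TD_Hn Hn_H by blast
  have "inv\<^bsub>H\<^esub> s \<circ> s = id" using HH.l_inv[OF sH] by simp
  then have "cact n (inv\<^bsub>H\<^esub> s) C = cact n id C"
    using cact_mult[OF TD_Hn[OF iT] TD_Hn[OF sT] C] sC by simp
  then show "inv\<^bsub>H\<^esub> s \<in> Stb n D C" using iT cact_id[OF C] unfolding Stb_def by simp
qed

lemma Stb_TD: "s \<in> Stb n D C \<Longrightarrow> s \<in> TD n D"
  unfolding Stb_def by blast

lemma gam_mult: assumes C: "C \<in> R n" and s: "s \<in> Stb n D C" and t: "t \<in> Stb n D C"
  shows "gam n C (s \<circ> t) = gam n C s \<otimes>\<^bsub>G\<^esub> gam n C t"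
proof (rule gam_unique[OF _ C])
  have sH: "s \<in> Hn n" and tH: "t \<in> Hn n" using s t Stb_TD TD_Hn by blast+
  show "s \<circ> t \<in> Hn n" using Hn_mult[OF sH tH] .
  show "gam n C s \<otimes>\<^bsub>G\<^esub> gam n C t \<in> carrier G" using gam(1)[OF sH C] gam(1)[OF tH C] by simp
  show "\<forall>y\<in>X. y n = C \<longrightarrow> (s \<circ> t) y = act (gam n C s \<otimes>\<^bsub>G\<^esub> gam n C t) y"
  proof (intro ballI impI)
    fix y assume y: "y \<in> X" "y n = C"
    have ty: "t y = act (gam n C t) y" using gam(2)[OF tH C] y by blast
    have tyX: "t y \<in> X" using H_X[OF Hn_H[OF tH] y(1)] .
    have "t y n = C" using cact_eq[OF tH y(1)] y(2) t unfolding Stb_def by simp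
    then have "s (t y) = act (gam n C s) (t y)" using gam(2)[OF sH C] tyX by blast
    then show "(s \<circ> t) y = act (gam n C s \<otimes>\<^bsub>G\<^esub> gam n C t) y"
      using ty y(1) gam(1)[OF sH C] gam(1)[OF tH C] by (simp add: act_mult)
  qed
qed

lemma gam_id: assumes C: "C \<in> R n" shows "gam n C id = \<one>\<^bsub>G\<^esub>"
  by (rule gam_unique[OF id_Hn C]) (simp_all add: act_one)

lemma fam_count: assumes "finite Y" "Y \<noteq> {}"
  shows "fam Y (\<lambda>B. real (card (B \<inter> Y)) / real (card Y))"
proof
  fix A B assume AB: "A \<subseteq> Y" "B \<subseteq> Y" "A \<inter> B = {}"
  have "card ((A \<union> B) \<inter> Y) = card (A \<inter> Y) + card (B \<inter> Y)"
    using AB assms(1) by (simp add: Int_absorb2 card_Un_disjoint finite_subset)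
  then show "real (card ((A \<union> B) \<inter> Y)) / real (card Y) =
      real (card (A \<inter> Y)) / real (card Y) + real (card (B \<inter> Y)) / real (card Y)"
    by (simp add: add_divide_distrib)
next
  show "real (card (Y \<inter> Y)) / real (card Y) = 1" using assms by simp
qed simp

lemma amenable_TD:
  assumes amG: "amenable G"
  shows "D \<subseteq> R n \<Longrightarrow> card (R n - D) = k \<Longrightarrow> amenable (H\<lparr>carrier := TD n D\<rparr>)"
proof (induction k arbitrary: D)
  case 0
  then have D: "D = R n" using fin by auto
  have "TD n D = {id}"
  proof
    show "{id} \<subseteq> TD n D" using id_TD by simp
    show "TD n D \<subseteq> {id}"
    proof
      fix s assume s: "s \<in> TD n D"
      have "s x = x" for x
      proof (cases "x \<in> X")
        case True then show ?thesis using s D X_iff unfolding TD_def by blast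
      next
        case False then show ?thesis using s H_out TD_Hn Hn_H by blast
      qed
      then show "s \<in> {id}" by (simp add: fun_eq_iff)
    qed
  qed
  then show ?case by (intro amenable_singleton[where e = id]) simp_all
next
  case (Suc k)
  have "R n - D \<noteq> {}" using Suc.prems by force
  then obtain C where C: "C \<in> R n" and nD: "C \<notin> D" by blast
  define K where "K = H\<lparr>carrier := TD n D\<rparr>"
  have grpK: "group K" unfolding K_def using HH.subgroup_imp_group[OF TD_sub] .
  define Y where "Y = (\<lambda>s. cact n s C) ` TD n D"
  have YR: "Y \<subseteq> R n" unfolding Y_def using cact_R[OF TD_Hn C] by blast
  have finY: "finite Y" using finite_subset[OF YR fin] .
  have CY: "C \<in> Y" unfolding Y_def using id_TD cact_id[OF C] by (metis image_eqI)
  define \<nu> where "\<nu> B = real (card (B \<inter> Y)) / real (card Y)" for B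
  have fam\<nu>: "fam Y \<nu>" unfolding \<nu>_def using fam_count finY CY by blast
  define S where "S = Stb n D C"
  have grpS: "group (H\<lparr>carrier := S\<rparr>)" unfolding S_def using HH.subgroup_imp_group[OF Stb_sub[OF C]] .
  have SH: "s \<in> Hn n" if "s \<in> S" for s using that unfolding S_def using Stb_TD TD_Hn by blast
  define Y2 where "Y2 = gam n C ` S"
  have Y2G: "Y2 \<subseteq> carrier G" unfolding Y2_def using gam(1)[OF SH C] by blast
  have idS: "id \<in> S" unfolding S_def Stb_def using id_TD cact_id[OF C] by simp
  have Smult: "s \<circ> t \<in> S" if "s \<in> S" "t \<in> S" for s t
    using subgroup.m_closed[OF Stb_sub[OF C] that[unfolded S_def]] unfolding S_def by simp
  have Sinv: "inv\<^bsub>H\<^esub> s \<in> S" if "s \<in> S" for s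
    using subgroup.m_inv_closed[OF Stb_sub[OF C] that[unfolded S_def]] unfolding S_def by simp
  have gm: "gam n C (s \<circ> t) = gam n C s \<otimes>\<^bsub>G\<^esub> gam n C t" if "s \<in> S" "t \<in> S" for s t
    using gam_mult[OF C] that unfolding S_def by blast
  have Y2sub: "subgroup Y2 G"
  proof (rule G.subgroupI)
    show "Y2 \<subseteq> carrier G" by (rule Y2G)
    show "Y2 \<noteq> {}" unfolding Y2_def using idS by blast
  next
    fix a assume "a \<in> Y2"
    then obtain s where s: "s \<in> S" "a = gam n C s" unfolding Y2_def by blast
    have sH: "s \<in> carrier H" using SH[OF s(1)] Hn_H by blast
    have "gam n C (inv\<^bsub>H\<^esub> s) \<otimes>\<^bsub>G\<^esub> gam n C s = gam n C (inv\<^bsub>H\<^esub> s \<circ> s)"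
      using gm[OF Sinv[OF s(1)] s(1)] by simp
    also have "\<dots> = \<one>\<^bsub>G\<^esub>" using HH.l_inv[OF sH] gam_id[OF C] by simp
    finally have "inv\<^bsub>G\<^esub> (gam n C s) = gam n C (inv\<^bsub>H\<^esub> s)"
      using G.inv_equality gam(1)[OF SH C] Sinv s(1) by blast
    then show "inv\<^bsub>G\<^esub> a \<in> Y2" unfolding Y2_def using s Sinv by auto
  next
    fix a b assume "a \<in> Y2" "b \<in> Y2"
    then obtain s t where "s \<in> S" "a = gam n C s" "t \<in> S" "b = gam n C t" unfolding Y2_def by blast
    then show "a \<otimes>\<^bsub>G\<^esub> b \<in> Y2" unfolding Y2_def using gm Smult by (metis image_eqI)
  qed
  obtain m2 where m2: "fam Y2 m2" "\<And>g A. g \<in> Y2 \<Longrightarrow> A \<subseteq> Y2 \<Longrightarrow> m2 (g <#\<^bsub>G\<^esub> A) = m2 A"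
    using amenableE[OF amenable_subgroup[OF grp Y2sub amG]] by auto
  have ker: "{h \<in> carrier (H\<lparr>carrier := S\<rparr>). gam n C h \<otimes>\<^bsub>G\<^esub> \<one>\<^bsub>G\<^esub> = \<one>\<^bsub>G\<^esub>} = TD n (insert C D)"
  proof (intro equalityI subsetI)
    fix s assume "s \<in> {h \<in> carrier (H\<lparr>carrier := S\<rparr>). gam n C h \<otimes>\<^bsub>G\<^esub> \<one>\<^bsub>G\<^esub> = \<one>\<^bsub>G\<^esub>}"
    then have s: "s \<in> S" "gam n C s = \<one>\<^bsub>G\<^esub>" using gam(1)[OF SH C] by auto
    have sT: "s \<in> TD n D" using s(1) unfolding S_def Stb_def by blast
    have "s y = y" if "y \<in> X" "y n = C" for y
      using gam(2)[OF SH[OF s(1)] C] s(2) that act_one by simp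
    then show "s \<in> TD n (insert C D)" using sT unfolding TD_def by auto
  next
    fix s assume s: "s \<in> TD n (insert C D)"
    have sT: "s \<in> TD n D" using s unfolding TD_def by auto
    have sH: "s \<in> Hn n" using TD_Hn[OF s] .
    have fx: "s y = y" if "y \<in> X" "y n = C" for y using s that unfolding TD_def by auto
    have "cact n s C = C" using fx pt[OF C] unfolding cact_def by simp
    then have sS: "s \<in> S" unfolding S_def Stb_def using sT by simp
    have "gam n C s = \<one>\<^bsub>G\<^esub>" using gam_unique[OF sH C G.one_closed] fx act_one by simp
    then show "s \<in> {h \<in> carrier (H\<lparr>carrier := S\<rparr>). gam n C h \<otimes>\<^bsub>G\<^esub> \<one>\<^bsub>G\<^esub> = \<one>\<^bsub>G\<^esub>}"
      using sS by simp
  qed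
  have amS: "amenable (H\<lparr>carrier := S\<rparr>)"
  proof (rule KL[OF grpS, where act = "\<lambda>s g. gam n C s \<otimes>\<^bsub>G\<^esub> g" and Y = Y2 and yb = "\<one>\<^bsub>G\<^esub>" and \<nu> = m2])
    fix g y assume "g \<in> carrier (H\<lparr>carrier := S\<rparr>)" "y \<in> Y2"
    then obtain t where "g \<in> S" "t \<in> S" "y = gam n C t" unfolding Y2_def by auto
    then show "gam n C g \<otimes>\<^bsub>G\<^esub> y \<in> Y2" unfolding Y2_def using gm Smult by (metis image_eqI)
  next
    fix g h y assume "g \<in> carrier (H\<lparr>carrier := S\<rparr>)" "h \<in> carrier (H\<lparr>carrier := S\<rparr>)" "y \<in> Y2"
    then have "g \<in> S" "h \<in> S" "y \<in> carrier G" using Y2G by auto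
    then show "gam n C (g \<otimes>\<^bsub>H\<lparr>carrier := S\<rparr>\<^esub> h) \<otimes>\<^bsub>G\<^esub> y = gam n C g \<otimes>\<^bsub>G\<^esub> (gam n C h \<otimes>\<^bsub>G\<^esub> y)"
      using gm gam(1)[OF SH C] by (simp add: G.m_assoc)
  next
    fix y assume "y \<in> Y2"
    then show "gam n C \<one>\<^bsub>H\<lparr>carrier := S\<rparr>\<^esub> \<otimes>\<^bsub>G\<^esub> y = y" using gam_id[OF C] Y2G by auto
  next
    show "\<one>\<^bsub>G\<^esub> \<in> Y2" using subgroup.one_closed[OF Y2sub] .
  next
    fix y assume "y \<in> Y2"
    then obtain t where t: "t \<in> S" "y = gam n C t" unfolding Y2_def by auto
    then show "\<exists>h\<in>carrier (H\<lparr>carrier := S\<rparr>). gam n C h \<otimes>\<^bsub>G\<^esub> \<one>\<^bsub>G\<^esub> = y"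
      using gam(1)[OF SH C] by auto
  next
    show "fam Y2 m2" by (rule m2(1))
  next
    fix g B assume g: "g \<in> carrier (H\<lparr>carrier := S\<rparr>)"
    define a where "a = gam n C g"
    have aY: "a \<in> Y2" unfolding a_def Y2_def using g by simp
    have ia: "inv\<^bsub>G\<^esub> a \<in> Y2" using subgroup.m_inv_closed[OF Y2sub aY] .
    have ac: "a \<in> carrier G" using aY Y2G by blast
    have "{y \<in> Y2. a \<otimes>\<^bsub>G\<^esub> y \<in> B} = inv\<^bsub>G\<^esub> a <#\<^bsub>G\<^esub> (B \<inter> Y2)"
    proof (intro equalityI subsetI)
      fix y assume y: "y \<in> {y \<in> Y2. a \<otimes>\<^bsub>G\<^esub> y \<in> B}"
      then have yc: "y \<in> carrier G" using Y2G by blast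
      have "a \<otimes>\<^bsub>G\<^esub> y \<in> Y2" using subgroup.m_closed[OF Y2sub aY] y by blast
      moreover have "y = inv\<^bsub>G\<^esub> a \<otimes>\<^bsub>G\<^esub> (a \<otimes>\<^bsub>G\<^esub> y)" using ac yc by simp
      ultimately show "y \<in> inv\<^bsub>G\<^esub> a <#\<^bsub>G\<^esub> (B \<inter> Y2)" using y unfolding l_coset_def by blast
    next
      fix y assume "y \<in> inv\<^bsub>G\<^esub> a <#\<^bsub>G\<^esub> (B \<inter> Y2)"
      then obtain b where b: "b \<in> B" "b \<in> Y2" "y = inv\<^bsub>G\<^esub> a \<otimes>\<^bsub>G\<^esub> b" unfolding l_coset_def by blast
      have bc: "b \<in> carrier G" using b Y2G by blast
      have "y \<in> Y2" using subgroup.m_closed[OF Y2sub ia b(2)] b(3) by simp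
      moreover have "a \<otimes>\<^bsub>G\<^esub> y = b" using b(3) ac bc by simp
      ultimately show "y \<in> {y \<in> Y2. a \<otimes>\<^bsub>G\<^esub> y \<in> B}" using b by simp
    qed
    then show "m2 {y \<in> Y2. gam n C g \<otimes>\<^bsub>G\<^esub> y \<in> B} = m2 (B \<inter> Y2)"
      using m2(2)[OF ia] unfolding a_def by simp
  next
    have e: "R n - insert C D = (R n - D) - {C}" by blast
    have "C \<in> R n - D" using C nD by blast
    then have "card (R n - insert C D) = k" unfolding e using Suc.prems(2) fin
      by (simp add: card_Diff_singleton)
    moreover have "insert C D \<subseteq> R n" using Suc.prems(1) C by blast
    ultimately have "amenable (H\<lparr>carrier := TD n (insert C D)\<rparr>)" using Suc.IH by blast
    then show "amenable (H\<lparr>carrier := S\<rparr>\<lparr>carrier := {h \<in> carrier (H\<lparr>carrier := S\<rparr>). gam n C h \<otimes>\<^bsub>G\<^esub> \<one>\<^bsub>G\<^esub> = \<one>\<^bsub>G\<^esub>}\<rparr>)"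
      using ker by simp
  qed
  have "amenable K"
  proof (rule KL[OF grpK, where act = "cact n" and Y = Y and yb = C and \<nu> = \<nu>])
    fix g y assume g: "g \<in> carrier K" and y: "y \<in> Y"
    then obtain t where t: "t \<in> TD n D" "y = cact n t C" unfolding Y_def by blast
    have gT: "g \<in> TD n D" using g unfolding K_def by simp
    have "cact n g y = cact n (g \<circ> t) C" using cact_mult[OF TD_Hn[OF gT] TD_Hn[OF t(1)] C] t by simp
    then show "cact n g y \<in> Y" unfolding Y_def using TD_mult[OF gT t(1)] by blast
  next
    fix g h y assume "g \<in> carrier K" "h \<in> carrier K" "y \<in> Y"
    then show "cact n (g \<otimes>\<^bsub>K\<^esub> h) y = cact n g (cact n h y)"
      unfolding K_def using cact_mult[OF TD_Hn TD_Hn] YR by auto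
  next
    fix y assume "y \<in> Y" then show "cact n \<one>\<^bsub>K\<^esub> y = y" unfolding K_def using cact_id YR by auto
  next
    show "C \<in> Y" by (rule CY)
  next
    fix y assume "y \<in> Y" then show "\<exists>h\<in>carrier K. cact n h C = y" unfolding Y_def K_def by auto
  next
    show "fam Y \<nu>" by (rule fam\<nu>)
  next
    fix g B assume g: "g \<in> carrier K"
    have gT: "g \<in> TD n D" using g unfolding K_def by simp
    have gH: "g \<in> carrier H" using gT TD_Hn Hn_H by blast
    define g' where "g' = inv\<^bsub>H\<^esub> g"
    have g'T: "g' \<in> TD n D" unfolding g'_def using TD_inv[OF gT] .
    have inv1: "cact n g' (cact n g y) = y" if "y \<in> R n" for y
      using cact_mult[OF TD_Hn[OF g'T] TD_Hn[OF gT] that] HH.l_inv[OF gH] cact_id[OF that]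
      unfolding g'_def by simp
    have inv2: "cact n g (cact n g' y) = y" if "y \<in> R n" for y
      using cact_mult[OF TD_Hn[OF gT] TD_Hn[OF g'T] that] HH.r_inv[OF gH] cact_id[OF that]
      unfolding g'_def by simp
    have mapY: "cact n h y \<in> Y" if hy: "h \<in> TD n D" "y \<in> Y" for h y
    proof -
      obtain t where t: "t \<in> TD n D" "y = cact n t C" using hy(2) unfolding Y_def by blast
      have "cact n h y = cact n (h \<circ> t) C" using cact_mult[OF TD_Hn[OF hy(1)] TD_Hn[OF t(1)] C] t by simp
      then show ?thesis unfolding Y_def using TD_mult[OF hy(1) t(1)] by blast
    qed
    have "bij_betw (cact n g) {y \<in> Y. cact n g y \<in> B} (B \<inter> Y)"
    proof (rule bij_betw_byWitness[where f' = "cact n g'"])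
      show "\<forall>a\<in>{y \<in> Y. cact n g y \<in> B}. cact n g' (cact n g a) = a" using inv1 YR by auto
      show "\<forall>a'\<in>B \<inter> Y. cact n g (cact n g' a') = a'" using inv2 YR by auto
      show "cact n g ` {y \<in> Y. cact n g y \<in> B} \<subseteq> B \<inter> Y" using mapY[OF gT] by auto
      show "cact n g' ` (B \<inter> Y) \<subseteq> {y \<in> Y. cact n g y \<in> B}" using mapY[OF g'T] inv2 YR by auto
    qed
    then have "card {y \<in> Y. cact n g y \<in> B} = card (B \<inter> Y)" by (rule bij_betw_same_card)
    moreover have "{y \<in> Y. cact n g y \<in> B} \<inter> Y = {y \<in> Y. cact n g y \<in> B}" by blast
    ultimately show "\<nu> {y \<in> Y. cact n g y \<in> B} = \<nu> (B \<inter> Y)" unfolding \<nu>_def by simp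
  next
    have "{h \<in> carrier K. cact n h C = C} = S" unfolding K_def S_def Stb_def by simp
    then show "amenable (K\<lparr>carrier := {h \<in> carrier K. cact n h C = C}\<rparr>)"
      using amS unfolding K_def by simp
  qed
  then show ?case unfolding K_def .
qed

lemma amenable_Hn: assumes "amenable G" shows "amenable (H\<lparr>carrier := Hn n\<rparr>)"
proof -
  have "TD n {} = Hn n" unfolding TD_def by simp
  then show ?thesis using amenable_TD[OF assms, of "{}" n] by simp
qed

end



context odo
begin

interpretation G: group G by (rule grp)
interpretation HH: group H by (rule group_H)

lemma coset_restrict:
  assumes g: "g \<in> Hn n" and A: "A \<subseteq> carrier H"
  shows "(g <#\<^bsub>H\<^esub> A) \<inter> Hn n = g <#\<^bsub>H\<^esub> (A \<inter> Hn n)"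
proof (intro equalityI subsetI)
  have gH: "g \<in> carrier H" using Hn_H[OF g] .
  fix x assume "x \<in> (g <#\<^bsub>H\<^esub> A) \<inter> Hn n"
  then obtain a where a: "a \<in> A" "x = g \<otimes>\<^bsub>H\<^esub> a" "x \<in> Hn n" unfolding l_coset_def by blast
  have ac: "a \<in> carrier H" using a A by blast
  have "a = inv\<^bsub>H\<^esub> g \<otimes>\<^bsub>H\<^esub> x"
  proof
    fix y show "a y = (inv\<^bsub>H\<^esub> g \<otimes>\<^bsub>H\<^esub> x) y" using a(2) invH(3)[OF gH, of "a y"] by simp
  qed
  moreover have "inv\<^bsub>H\<^esub> g \<otimes>\<^bsub>H\<^esub> x \<in> Hn n"
    using subgroup.m_closed[OF Hn_sub subgroup.m_inv_closed[OF Hn_sub g] a(3)] .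
  ultimately have "a \<in> Hn n" by simp
  then show "x \<in> g <#\<^bsub>H\<^esub> (A \<inter> Hn n)" using a unfolding l_coset_def by blast
next
  fix x assume "x \<in> g <#\<^bsub>H\<^esub> (A \<inter> Hn n)"
  then obtain a where a: "a \<in> A" "a \<in> Hn n" "x = g \<otimes>\<^bsub>H\<^esub> a" unfolding l_coset_def by blast
  have "x \<in> Hn n" using subgroup.m_closed[OF Hn_sub g a(2)] a(3) by simp
  then show "x \<in> (g <#\<^bsub>H\<^esub> A) \<inter> Hn n" using a unfolding l_coset_def by blast
qed

lemma amenable_H: assumes amG: "amenable G" shows "amenable H"
proof -
  have "\<forall>n. \<exists>m. fam (Hn n) m \<and> (\<forall>g A. g \<in> Hn n \<longrightarrow> A \<subseteq> Hn n \<longrightarrow> m (g <#\<^bsub>H\<^esub> A) = m A)"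
  proof
    fix n
    obtain m where "fam (Hn n) m"
      "\<And>g A. g \<in> carrier (H\<lparr>carrier := Hn n\<rparr>) \<Longrightarrow> A \<subseteq> carrier (H\<lparr>carrier := Hn n\<rparr>) \<Longrightarrow>
         m (g <#\<^bsub>H\<lparr>carrier := Hn n\<rparr>\<^esub> A) = m A"
      using amenableE[OF amenable_Hn[OF amG, of n]] by auto
    then show "\<exists>m. fam (Hn n) m \<and> (\<forall>g A. g \<in> Hn n \<longrightarrow> A \<subseteq> Hn n \<longrightarrow> m (g <#\<^bsub>H\<^esub> A) = m A)"
      by auto
  qed
  then have "\<exists>M. \<forall>n. fam (Hn n) (M n) \<and> (\<forall>g A. g \<in> Hn n \<longrightarrow> A \<subseteq> Hn n \<longrightarrow> M n (g <#\<^bsub>H\<^esub> A) = M n A)"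
    by (rule choice)
  then obtain M where M: "\<And>n. fam (Hn n) (M n)"
    "\<And>n g A. g \<in> Hn n \<Longrightarrow> A \<subseteq> Hn n \<Longrightarrow> M n (g <#\<^bsub>H\<^esub> A) = M n A" by blast
  define s where "s n A = M n (A \<inter> Hn n)" for n A
  have sb: "0 \<le> s n A \<and> s n A \<le> 1" for n A
    unfolding s_def using fam.nonneg[OF M(1)] fam.le1[OF M(1)] by auto
  obtain \<mu> where \<mu>: "\<And>Z. closed Z \<Longrightarrow> (\<forall>\<^sub>F n in sequentially. s n \<in> Z) \<Longrightarrow> \<mu> \<in> Z"
    using cluster_point[of s, OF sb] by blast
  show ?thesis
  proof (rule amenableI[where \<mu> = \<mu>])
    have "closed {f :: (((nat \<Rightarrow> 'a set) \<Rightarrow> (nat \<Rightarrow> 'a set)) set \<Rightarrow> real). f (carrier H) = 1}"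
      by (intro closed_Collect_eq continuous_on_const) simp
    moreover have "s n (carrier H) = 1" for n
      unfolding s_def using fam.total[OF M(1)] Hn_H by (simp add: Int_absorb1 subsetI)
    ultimately show "\<mu> (carrier H) = 1" using \<mu>[of "{f. f (carrier H) = 1}"] by simp
  next
    fix A
    have "closed {f :: (((nat \<Rightarrow> 'a set) \<Rightarrow> (nat \<Rightarrow> 'a set)) set \<Rightarrow> real). 0 \<le> f A}"
      by (intro closed_Collect_le continuous_on_const) simp
    then show "0 \<le> \<mu> A" using \<mu>[of "{f. 0 \<le> f A}"] sb by simp
  next
    fix A B assume AB: "A \<subseteq> carrier H" "B \<subseteq> carrier H" "A \<inter> B = {}"
    have "closed {f :: (((nat \<Rightarrow> 'a set) \<Rightarrow> (nat \<Rightarrow> 'a set)) set \<Rightarrow> real). f (A \<union> B) = f A + f B}"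
      by (intro closed_Collect_eq continuous_on_add) simp_all
    moreover have "s n (A \<union> B) = s n A + s n B" for n
    proof -
      have "(A \<union> B) \<inter> Hn n = (A \<inter> Hn n) \<union> (B \<inter> Hn n)" by blast
      moreover have "(A \<inter> Hn n) \<inter> (B \<inter> Hn n) = {}" using AB by blast
      ultimately show ?thesis unfolding s_def using fam.add[OF M(1)] by simp
    qed
    ultimately show "\<mu> (A \<union> B) = \<mu> A + \<mu> B" using \<mu>[of "{f. f (A \<union> B) = f A + f B}"] by simp
  next
    fix g A assume gA: "g \<in> carrier H" "A \<subseteq> carrier H"
    have "closed {f :: (((nat \<Rightarrow> 'a set) \<Rightarrow> (nat \<Rightarrow> 'a set)) set \<Rightarrow> real). f (g <#\<^bsub>H\<^esub> A) = f A}"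
      by (intro closed_Collect_eq) simp_all
    moreover have "\<forall>\<^sub>F n in sequentially. s n (g <#\<^bsub>H\<^esub> A) = s n A"
    proof -
      obtain N where N: "\<And>n. n \<ge> N \<Longrightarrow> g \<in> Hn n" using Hn_eventually[OF gA(1)] by blast
      have "s n (g <#\<^bsub>H\<^esub> A) = s n A" if "n \<ge> N" for n
        unfolding s_def coset_restrict[OF N[OF that] gA(2)] using M(2)[OF N[OF that]] by simp
      then show ?thesis unfolding eventually_sequentially by blast
    qed
    ultimately show "\<mu> (g <#\<^bsub>H\<^esub> A) = \<mu> A" using \<mu>[of "{f. f (g <#\<^bsub>H\<^esub> A) = f A}"] by simp
  qed
qed

definition emb :: "'a \<Rightarrow> (nat \<Rightarrow> 'a set) \<Rightarrow> (nat \<Rightarrow> 'a set)" where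
  "emb g x = (if x \<in> X then act g x else x)"

lemma emb_H: assumes g: "g \<in> carrier G" shows "emb g \<in> carrier H"
proof -
  have ig: "inv\<^bsub>G\<^esub> g \<in> carrier G" using g by simp
  have c1: "continuous_map T T (emb g)"
    using continuous_map_eq[OF act_cont[OF g]] topT unfolding emb_def by simp
  have c2: "continuous_map T T (emb (inv\<^bsub>G\<^esub> g))"
    using continuous_map_eq[OF act_cont[OF ig]] topT unfolding emb_def by simp
  have "homeomorphic_maps T T (emb g) (emb (inv\<^bsub>G\<^esub> g))"
    unfolding homeomorphic_maps_def using c1 c2 topT act_X g ig act_inv act_inv2
    by (simp add: emb_def)
  then have "homeomorphic_map T T (emb g)" using homeomorphic_map_maps by blast
  moreover have "locg (emb g)" unfolding locg_def
  proof
    fix x assume x: "x \<in> X"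
    show "\<exists>U h. openin T U \<and> closedin T U \<and> x \<in> U \<and> h \<in> carrier G \<and> (\<forall>y\<in>U. emb g y = act h y)"
      using x g openin_topspace[of T] closedin_topspace[of T] unfolding topT
      by (intro exI[of _ X] exI[of _ g]) (simp add: emb_def)
  qed
  ultimately show ?thesis unfolding carrier_H by (simp add: emb_def)
qed

lemma emb_hom: "emb \<in> hom G H"
proof (rule homI)
  fix g assume "g \<in> carrier G" then show "emb g \<in> carrier H" by (rule emb_H)
next
  fix g h assume gh: "g \<in> carrier G" "h \<in> carrier G"
  show "emb (g \<otimes>\<^bsub>G\<^esub> h) = emb g \<otimes>\<^bsub>H\<^esub> emb h"
  proof
    fix x show "emb (g \<otimes>\<^bsub>G\<^esub> h) x = (emb g \<otimes>\<^bsub>H\<^esub> emb h) x"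
      using gh act_X act_mult by (simp add: emb_def)
  qed
qed

lemma emb_inj: "inj_on emb (carrier G)"
proof
  fix g h assume gh: "g \<in> carrier G" "h \<in> carrier G" "emb g = emb h"
  then have "act g (\<lambda>n. Gs n) = act h (\<lambda>n. Gs n)" using X_ne unfolding emb_def by (metis (no_types))
  then show "g = h" using act_unique gh X_ne by blast
qed

theorem main: "amenable H \<longleftrightarrow> amenable G"
  using amenable_H amenable_inj_hom[OF grp group_H emb_hom emb_inj] by blast

end


theorem corollary4p6:
  fixes G :: "('a, 'b) monoid_scheme" and Gs :: "nat \<Rightarrow> 'a set"
  assumes "group G"
    and "countable (carrier G)"
    and "\<And>n. Gs n \<lhd> G"
    and "\<And>n. finite (rcosets\<^bsub>G\<^esub> (Gs n))"
    and "\<And>n. Gs (Suc n) \<subseteq> Gs n"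
    and free: "\<And>g x. g \<in> carrier G \<Longrightarrow> x \<in> odometer_space G Gs \<Longrightarrow>
                 odometer_action G g x = x \<Longrightarrow> g = \<one>\<^bsub>G\<^esub>"
  shows "amenable (topological_full_group G Gs) \<longleftrightarrow> amenable G"
proof -
  interpret odo G Gs
    by (rule odo.intro) (use assms in auto)
  show ?thesis by (rule main)
qed

end
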